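(* Consider the noiseless least squares deterministic dynamics under AdaGrad-Norm described in the context. Let $K$ have a spectrum that converges as $d\to\infty$ to the power law measure $\rho(\lambda)=(1-\beta)\lambda^{-\beta}\mathbf 1_{(0,1)}(\lambda)$ for some $\beta<1$, and suppose $D_i^2(0)\sim\lambda_i^{-\delta}$ for some $\delta\ge0$. Then: (i) if $\beta+\delta<1$, there exists $\tilde\gamma>0$ with $\gamma_t\ge\tilde\gamma$, and $R(t)\asymp_{\delta,\beta}t^{\beta+\delta-2}$ for all $t\ge1$; (ii) if $1<\beta+\delta<2$, then $\gamma_t\asymp_{\delta,\beta}t^{-1+\frac1{\beta+\delta}}$ and $R(t)\asymp_{\delta,\beta}t^{-\frac{2}{\beta+\delta}+1}$ for all $t\ge1$; (iii) if $\beta+\delta=1$, then $\gamma_t\asymp_{\delta,\beta}\frac{1}{\log(t+1)}$ and $R(t)\asymp_{\delta,\beta}\big(\frac{t}{\log(t+1)}\big)^{-1}$ for all $t\ge1$.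
   Context: Noiseless least squares: $\mathcal R(X)=\frac12(X-X^\star)^TK(X-X^\star)$, $K$ with eigenpairs $(\lambda_i,\omega_i)$. Deterministic dynamics: $D_i^2(0)=d\langle X_0-X^\star,\omega_i\rangle^2$, $\frac{d}{dt}D_i^2(t)=-2\gamma_t\lambda_iD_i^2(t)+2\gamma_t^2\lambda_iR(t)$, $R(t)=\frac1{2d}\sum_i\lambda_iD_i^2(t)$, with AdaGrad-Norm learning rate $\gamma_t=\eta\big/\sqrt{b^2+\frac{2\mathrm{Tr}(K)}{d}\int_0^tR(s)\,ds}$, $b,\eta>0$. Notation: $f\asymp_{\delta,\beta}g$ means $c\,g\le f\le C\,g$ with constants $c,C>0$ depending on $\delta,\beta$. *)

theory Defs
  imports "HOL-Analysis.Analysis"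
begin

definition pl_density :: "real \<Rightarrow> real \<Rightarrow> real" where
  "pl_density \<beta> l = (if 0 < l \<and> l < 1 then (1 - \<beta>) * l powr (- \<beta>) else 0)"

text \<open>Limit of Tr(K)/d: the first moment of the spectral measure.\<close>
definition pl_mean :: "real \<Rightarrow> real" where
  "pl_mean \<beta> = (1 - \<beta>) / (2 - \<beta>)"

text \<open>Deterministic AdaGrad-Norm dynamics for noiseless least squares in the
  limit d to infinity: D l t plays the role of D_i^2(t) for eigenvalue l,
  R is the risk, gam the AdaGrad-Norm learning rate.\<close>
definition adagrad_norm_ls_dynamics ::
  "real \<Rightarrow> real \<Rightarrow> real \<Rightarrow> (real \<Rightarrow> real \<Rightarrow> real) \<Rightarrow> (real \<Rightarrow> real) \<Rightarrow> (real \<Rightarrow> real) \<Rightarrow> bool"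
where
  "adagrad_norm_ls_dynamics \<beta> b \<eta> D R gam \<longleftrightarrow>
     continuous_on {0..} R \<and>
     (\<forall>t\<ge>0. gam t = \<eta> / sqrt (b\<^sup>2 + 2 * pl_mean \<beta> * integral {0..t} R)) \<and>
     (\<forall>t\<ge>0. ((\<lambda>l. l * D l t * pl_density \<beta> l) has_integral (2 * R t)) {0<..<1}) \<and>
     (\<forall>l\<in>{0<..<1}. \<forall>t\<ge>0.
        ((\<lambda>s. D l s) has_real_derivative
           (- 2 * gam t * l * D l t + 2 * (gam t)\<^sup>2 * l * R t)) (at t within {0..}))"

definition asymp_ge1 :: "(real \<Rightarrow> real) \<Rightarrow> (real \<Rightarrow> real) \<Rightarrow> bool" where
  "asymp_ge1 f g \<longleftrightarrow> (\<exists>c C. 0 < c \<and> 0 < C \<and> (\<forall>t\<ge>1. c * g t \<le> f t \<and> f t \<le> C * g t))"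

end

theory Submission
  imports Defs
begin

lemma hi_open01:
  fixes f :: "real \<Rightarrow> real"
  shows "(f has_integral I) {0<..<1::real} \<longleftrightarrow> (f has_integral I) {0..1}"
proof (rule has_integral_spike_set_eq)
  show "negligible {x \<in> {0<..<1::real} - {0..1}. f x \<noteq> 0}"
    by (rule negligible_subset[OF negligible_empty]) auto
  have "{x \<in> {0..1::real} - {0<..<1}. f x \<noteq> 0} \<subseteq> {0,1}" by auto
  then show "negligible {x \<in> {0..1::real} - {0<..<1}. f x \<noteq> 0}"
    using negligible_subset by (metis finite.emptyI finite_insert negligible_finite)
qed

lemma powr_hi01:
  assumes "r > -1"
  shows "((\<lambda>l. l powr r) has_integral 1/(r+1)) {0<..<1::real}"
  using has_integral_powr_from_0[OF assms, of 1] by (simp add: hi_open01)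

lemma powr_hi0u:
  assumes "r > -1" "0 \<le> u"
  shows "((\<lambda>l. l powr r) has_integral u powr (r+1)/(r+1)) {0<..<u::real}"
proof -
  have "((\<lambda>l. l powr r) has_integral u powr (r+1)/(r+1)) {0..u}"
    using has_integral_powr_from_0[OF assms] .
  moreover have "negligible {x \<in> {0..u} - {0<..<u}. x powr r \<noteq> 0}"
  proof -
    have "{x \<in> {0..u} - {0<..<u}. x powr r \<noteq> 0} \<subseteq> {0,u}" by auto
    then show ?thesis using negligible_subset by (metis finite.emptyI finite_insert negligible_finite)
  qed
  ultimately show ?thesis
    by (subst has_integral_spike_set_eq[of "{0<..<u}" "{0..u}" "\<lambda>l. l powr r"])
      (auto intro: negligible_subset[OF negligible_empty])
qed

lemma int01_bound:
  fixes f :: "real \<Rightarrow> real"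
  assumes "continuous_on {0<..<1} f" "r > -1"
    and "\<And>l. l \<in> {0<..<1} \<Longrightarrow> \<bar>f l\<bar> \<le> C * l powr r"
  shows "f integrable_on {0<..<1}"
proof -
  have "f \<in> borel_measurable (lebesgue_on {0<..<1})"
    by (rule continuous_imp_measurable_on_sets_lebesgue[OF assms(1)]) simp
  moreover have "(\<lambda>l. C * l powr r) integrable_on {0<..<1}"
    using has_integral_mult_right[OF powr_hi01[OF assms(2)], of C] by (auto simp: integrable_on_def)
  ultimately have "f absolutely_integrable_on {0<..<1}"
    by (intro measurable_bounded_by_integrable_imp_absolutely_integrable[where g="\<lambda>l. C * l powr r"])
       (use assms(3) in auto)
  then show ?thesis using set_lebesgue_integral_eq_integral(1) by blast
qed

lemma powexp_integrable:
  assumes "r > -1" "k \<ge> 0"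
  shows "(\<lambda>l. l powr r * exp (- (k * l))) integrable_on {0<..<1::real}"
proof (rule int01_bound[where C=1 and r=r])
  show "continuous_on {0<..<1} (\<lambda>l. l powr r * exp (- (k * l)))"
    by (intro continuous_intros) auto
  fix l :: real assume l: "l \<in> {0<..<1}"
  have "exp (- (k*l)) \<le> 1" using l assms by auto
  then show "\<bar>l powr r * exp (- (k * l))\<bar> \<le> 1 * l powr r"
    using l by (simp add: abs_mult mult_left_le)
qed (use assms in auto)

lemma powexp_int_le1:
  assumes "r > -1" "k \<ge> 0"
  shows "integral {0<..<1::real} (\<lambda>l. l powr r * exp (- (k * l))) \<le> 1/(r+1)"
proof -
  have "integral {0<..<1::real} (\<lambda>l. l powr r * exp (- (k * l))) \<le> integral {0<..<1::real} (\<lambda>l. l powr r)"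
  proof (rule integral_le[OF powexp_integrable[OF assms]])
    show "(\<lambda>l. l powr r) integrable_on {0<..<1::real}" using powr_hi01[OF assms(1)] by blast
    fix l :: real assume l: "l \<in> {0<..<1}"
    have "exp (- (k*l)) \<le> 1" using l assms by auto
    then show "l powr r * exp (- (k * l)) \<le> l powr r" using l by (simp add: mult_left_le)
  qed
  then show ?thesis using powr_hi01[OF assms(1)] by (simp add: integral_unique)
qed

lemma powexp_gamma:
  assumes "r > -1" "M > 0"
  shows "integral {0<..<1::real} (\<lambda>l. l powr r * exp (- (M * l))) \<le> M powr (-(r+1)) * Gamma (r+1)"
proof -
  define g where "g = (\<lambda>t::real. t powr r / exp t)"
  have G: "(g has_integral Gamma (r+1)) {0..}"
    using Gamma_integral_real[of "r+1"] assms by (simp add: g_def)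
  have gi: "g integrable_on {0..M}"
    using G integrable_on_subinterval[of g "{0..}" 0 M] by (auto simp: integrable_on_def)
  have le: "integral {0..M} g \<le> Gamma (r+1)"
    by (rule has_integral_subset_le[OF _ integrable_integral[OF gi] G]) (auto simp: g_def)
  have st: "((\<lambda>x. g (M * x)) has_integral (1 / \<bar>M\<bar>) *\<^sub>R integral {0..M} g) ((\<lambda>x. x / M) ` {0..M})"
    using has_integral_stretch_real[OF integrable_integral[OF gi], of M] assms by auto
  have img: "(\<lambda>x. x / M) ` {0..M} = {0..1}" using assms by fastforce
  have eq: "g (M * x) = M powr r * (x powr r * exp (- (M * x)))" if "x \<ge> 0" for x
    using that assms by (simp add: g_def powr_mult exp_minus field_simps)
  have "((\<lambda>x. M powr r * (x powr r * exp (- (M * x)))) has_integral (1/M) * integral {0..M} g) {0..1}"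
  proof -
    have "((\<lambda>x. g (M * x)) has_integral (1/M) * integral {0..M} g) {0..1}"
      using st img assms by simp
    then show ?thesis
      by (rule has_integral_eq[rotated]) (simp add: eq)
  qed
  then have "((\<lambda>x. M powr (-r) * (M powr r * (x powr r * exp (- (M * x))))) has_integral M powr (-r) * ((1/M) * integral {0..M} g)) {0..1}"
    by (rule has_integral_mult_right)
  moreover have "M powr (-r) * M powr r = 1" using assms by (simp add: powr_add[symmetric])
  ultimately have "((\<lambda>x. x powr r * exp (- (M * x))) has_integral M powr (-r) * ((1/M) * integral {0..M} g)) {0..1}"
    by (simp add: mult.assoc[symmetric])
  then have "integral {0<..<1::real} (\<lambda>l. l powr r * exp (- (M * l))) = M powr (-r) * ((1/M) * integral {0..M} g)"
    by (simp add: hi_open01[symmetric] integral_unique)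
  also have "\<dots> = M powr (-(r+1)) * integral {0..M} g"
  proof -
    have "M powr (-(r+1)) = M powr (-r) * M powr (-1)" using powr_add[of M "-r" "-1"] by (simp add: algebra_simps)
    also have "\<dots> = M powr (-r) / M" using assms by (simp add: powr_neg_one divide_inverse)
    finally have "M powr (-(r+1)) = M powr (-r) / M" .
    then show ?thesis using assms by (simp add: powr_neg_one)
  qed
  also have "\<dots> \<le> M powr (-(r+1)) * Gamma (r+1)"
    using le by (intro mult_left_mono) auto
  finally show ?thesis .
qed

lemma powexp_lower:
  assumes "r > -1" "k \<ge> 0"
  shows "exp (-1) * (1+k) powr (-(r+1)) / (r+1) \<le> integral {0<..<1::real} (\<lambda>l. l powr r * exp (- (k * l)))"
proof -
  define u where "u = 1/(1+k)"
  have u: "0 < u" "u \<le> 1" using assms by (auto simp: u_def)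
  have "((\<lambda>l. exp (-1) * l powr r) has_integral exp (-1) * (u powr (r+1)/(r+1))) {0<..<u}"
    using has_integral_mult_right[OF powr_hi0u[OF assms(1), of u]] u by simp
  then have g: "((\<lambda>l. if l \<in> {0<..<u} then exp (-1) * l powr r else 0) has_integral exp (-1) * (u powr (r+1)/(r+1))) {0<..<1}"
    using u by (subst has_integral_restrict) auto
  have "exp (-1) * (u powr (r+1)/(r+1)) \<le> integral {0<..<1::real} (\<lambda>l. l powr r * exp (- (k * l)))"
  proof (rule has_integral_le[OF g integrable_integral[OF powexp_integrable[OF assms]]])
    fix l :: real assume l: "l \<in> {0<..<1}"
    show "(if l \<in> {0<..<u} then exp (-1) * l powr r else 0) \<le> l powr r * exp (- (k * l))"
    proof (cases "l < u")
      case True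
      have "k * l \<le> k * u" using True assms by (intro mult_left_mono) auto
      also have "k * u \<le> 1" using assms by (simp add: u_def field_simps)
      finally have "exp (-1) \<le> exp (- (k*l))" by simp
      then show ?thesis using True l by (simp add: mult.commute mult_left_mono)
    qed (use l in auto)
  qed
  moreover have "u powr (r+1) = (1+k) powr (-(r+1))"
  proof -
    have "u powr (r+1) = 1 / (1+k) powr (r+1)" using assms by (simp add: u_def powr_divide)
    also have "\<dots> = (1+k) powr (-(r+1))" by (rule powr_minus_divide[symmetric])
    finally show ?thesis .
  qed
  ultimately show ?thesis by simp
qed

definition CE :: "real \<Rightarrow> real" where
  "CE r = 2 powr (r+1) * (Gamma (r+1) + 1/(r+1))"

lemma CE_pos: "r > -1 \<Longrightarrow> CE r > 0"
proof -
  assume r: "r > -1"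
  have "Gamma (r+1) > 0" by (rule Gamma_real_pos) (use r in simp)
  then show ?thesis using r unfolding CE_def by (intro mult_pos_pos add_pos_pos) auto
qed

lemma powexp_upper:
  assumes "r > -1" "k \<ge> 0"
  shows "integral {0<..<1::real} (\<lambda>l. l powr r * exp (- (k * l))) \<le> CE r * (1+k) powr (-(r+1))"
proof (cases "k \<le> 1")
  case True
  have "2 powr (-(r+1)) \<le> (1+k) powr (-(r+1))"
    using True assms by (intro powr_mono2') auto
  then have "2 powr (r+1) * 2 powr (-(r+1)) * (1/(r+1)) \<le> 2 powr (r+1) * (1+k) powr (-(r+1)) * (1/(r+1))"
    using assms by (intro mult_right_mono mult_left_mono) auto
  moreover have "2 powr (r+1) * 2 powr (-(r+1)) = (1::real)" using powr_add[of 2 "r+1" "-(r+1)"] by simp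
  moreover have "2 powr (r+1) * (1+k) powr (-(r+1)) * Gamma (r+1) \<ge> 0"
    using assms Gamma_real_pos[of "r+1"] by simp
  ultimately have "1/(r+1) \<le> CE r * (1+k) powr (-(r+1))"
    unfolding CE_def by (simp add: algebra_simps)
  then show ?thesis using powexp_int_le1[OF assms] by linarith
next
  case False
  define M where "M = (1+k)/2"
  have M: "M > 0" "M \<le> k" using False by (auto simp: M_def)
  have "integral {0<..<1::real} (\<lambda>l. l powr r * exp (- (k * l))) \<le> integral {0<..<1::real} (\<lambda>l. l powr r * exp (- (M * l)))"
  proof (rule integral_le[OF powexp_integrable[OF assms] powexp_integrable[OF assms(1)]])
    show "M \<ge> 0" using M by simp
    fix l :: real assume l: "l \<in> {0<..<1}"
    have "M * l \<le> k * l" using M l by (intro mult_right_mono) auto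
    then show "l powr r * exp (- (k * l)) \<le> l powr r * exp (- (M * l))"
      using l by (intro mult_left_mono) auto
  qed
  also have "\<dots> \<le> M powr (-(r+1)) * Gamma (r+1)" by (rule powexp_gamma[OF assms(1) M(1)])
  also have "M powr (-(r+1)) = 2 powr (r+1) * (1+k) powr (-(r+1))"
  proof -
    have "M powr (-(r+1)) = (1+k) powr (-(r+1)) / 2 powr (-(r+1))"
    using assms unfolding M_def by (simp add: powr_divide)
    also have "\<dots> = (1+k) powr (-(r+1)) * 2 powr (r+1)" using powr_minus[of "2::real" "r+1"] by (simp add: divide_inverse)
    finally show ?thesis by simp
  qed
  also have "2 powr (r+1) * (1+k) powr (-(r+1)) * Gamma (r+1) \<le> CE r * (1+k) powr (-(r+1))"
    using assms unfolding CE_def by (simp add: algebra_simps)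
  finally show ?thesis by simp
qed

lemma ftc_real:
  assumes "a \<le> b" "\<And>x. x \<in> {a..b} \<Longrightarrow> (f has_real_derivative f' x) (at x within {a..b})"
  shows "(f' has_integral (f b - f a)) {a..b}"
  using assms by (intro fundamental_theorem_of_calculus) (auto simp: has_real_derivative_iff_has_vector_derivative[symmetric])

lemma deriv_mono:
  assumes "a \<le> b" "\<And>x. x \<in> {a..b} \<Longrightarrow> (f has_real_derivative f' x) (at x within {a..b})"
    and "\<And>x. x \<in> {a..b} \<Longrightarrow> f' x \<ge> 0"
  shows "f a \<le> f b"
  using has_integral_nonneg[OF ftc_real[OF assms(1,2)]] assms(3) by force

lemma cont_induct:
  fixes f g :: "real \<Rightarrow> real"
  assumes cf: "\<And>T. continuous_on {0..T} f" and cg: "\<And>T. continuous_on {0..T} g" and f0: "f 0 < g 0"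
    and step: "\<And>t. t \<ge> 0 \<Longrightarrow> (\<forall>s\<in>{0..t}. f s \<le> g s) \<Longrightarrow> f t < g t"
    and t: "t \<ge> 0"
  shows "f t < g t"
proof (rule ccontr)
  assume nt: "\<not> f t < g t"
  define B where "B = {s \<in> {0..t}. g s - f s \<le> 0}"
  have cB: "continuous_on {0..t} (\<lambda>s. g s - f s)" using cf cg by (intro continuous_intros)
  have clB: "closed B" unfolding B_def
    using continuous_on_closed_Collect_le[OF cB continuous_on_const[of _ 0] closed_atLeastAtMost] by simp
  have tB: "t \<in> B" using nt t by (auto simp: B_def)
  have sub: "B \<subseteq> {0..t}" by (auto simp: B_def)
  define t1 where "t1 = Inf B"
  have bdd: "bdd_below B" using sub by (meson bdd_below_Icc bdd_below_mono)
  have t1B: "t1 \<in> B" unfolding t1_def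
    using closed_contains_Inf[OF _ bdd clB] tB by blast
  have less: "f s < g s" if "s \<in> {0..<t1}" for s
  proof (rule ccontr)
    assume "\<not> f s < g s"
    then have "s \<in> B" using that t1B by (auto simp: B_def)
    then have "t1 \<le> s" unfolding t1_def using bdd by (simp add: cInf_lower)
    then show False using that by auto
  qed
  have t1pos: "t1 > 0"
  proof (rule ccontr)
    assume "\<not> t1 > 0"
    then have "t1 = 0" using t1B by (auto simp: B_def)
    then show False using t1B f0 by (auto simp: B_def)
  qed
  have cC: "continuous_on {0..t1} (\<lambda>s. f s - g s)" using cf cg by (intro continuous_intros)
  have clC: "closed {s \<in> {0..t1}. f s - g s \<le> 0}"
    using continuous_on_closed_Collect_le[OF cC continuous_on_const[of _ 0] closed_atLeastAtMost] by simp
  have "{0..<t1} \<subseteq> {s \<in> {0..t1}. f s - g s \<le> 0}" using less by fastforce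
  then have "closure {0..<t1} \<subseteq> {s \<in> {0..t1}. f s - g s \<le> 0}"
    using clC by (rule closure_minimal)
  then have all: "\<forall>s\<in>{0..t1}. f s \<le> g s" using t1pos by auto
  have "f t1 < g t1" using step[OF _ all] t1pos by simp
  then show False using t1B by (auto simp: B_def)
qed

locale adag =
  fixes \<beta> \<delta> b \<eta> a A :: real and D :: "real \<Rightarrow> real \<Rightarrow> real" and R gam :: "real \<Rightarrow> real"
  assumes beta: "\<beta> < 1" and delta: "\<delta> \<ge> 0" and bpos: "b > 0" and etapos: "\<eta> > 0"
    and apos: "a > 0" and Apos: "A > 0"
    and init: "\<forall>l\<in>{0<..<1}. a * l powr (- \<delta>) \<le> D l 0 \<and> D l 0 \<le> A * l powr (- \<delta>)"
    and dyn: "adagrad_norm_ls_dynamics \<beta> b \<eta> D R gam"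
    and alpha2: "\<beta> + \<delta> < 2"
begin

definition "c0 = pl_mean \<beta>"
definition "S t = integral {0..t} R"
definition "Gm t = integral {0..t} gam"
definition "p = 2 - (\<beta> + \<delta>)"

lemma p_pos: "p > 0" using alpha2 by (simp add: p_def)

lemma c0_pos: "c0 > 0" using beta by (simp add: c0_def pl_mean_def)

lemma Rc: "continuous_on {0..T} R"
  using dyn continuous_on_subset[of "{0..}" R "{0..T}"] by (auto simp: adagrad_norm_ls_dynamics_def)

lemma gam_eq: "t \<ge> 0 \<Longrightarrow> gam t = \<eta> / sqrt (b\<^sup>2 + 2 * c0 * S t)"
  using dyn by (simp add: adagrad_norm_ls_dynamics_def c0_def S_def)

lemma hint: "t \<ge> 0 \<Longrightarrow> ((\<lambda>l. l * D l t * pl_density \<beta> l) has_integral (2 * R t)) {0<..<1}"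
  using dyn by (simp add: adagrad_norm_ls_dynamics_def)

lemma Dder: "l \<in> {0<..<1} \<Longrightarrow> t \<ge> 0 \<Longrightarrow>
  ((\<lambda>s. D l s) has_real_derivative (- 2 * gam t * l * D l t + 2 * (gam t)\<^sup>2 * l * R t)) (at t within {0..})"
  using dyn unfolding adagrad_norm_ls_dynamics_def by blast

lemma S_der: "0 \<le> t \<Longrightarrow> t \<le> T \<Longrightarrow> (S has_real_derivative R t) (at t within {0..T})"
  unfolding S_def by (rule integral_has_real_derivative[OF Rc]) auto

lemma S_cont: "continuous_on {0..T} S"
  unfolding S_def by (rule indefinite_integral_continuous_1[OF integrable_continuous_real[OF Rc]])

lemma S0: "S 0 = 0" by (simp add: S_def)
lemma Gm0: "Gm 0 = 0" by (simp add: Gm_def)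

lemma S_nonneg_cond: "t \<ge> 0 \<Longrightarrow> \<forall>s\<in>{0..t}. R s \<ge> 0 \<Longrightarrow> s \<in> {0..t} \<Longrightarrow> S s \<ge> 0"
  unfolding S_def
  by (rule integral_nonneg[OF integrable_continuous_real[OF Rc]]) auto

lemma gam_cont_cond:
  assumes "t \<ge> 0" "\<forall>s\<in>{0..t}. R s \<ge> 0"
  shows "continuous_on {0..t} gam"
proof -
  have c1: "continuous_on {0..t} (\<lambda>s. sqrt (b\<^sup>2 + 2 * c0 * S s))" by (intro continuous_intros S_cont)
  have nz: "\<forall>s\<in>{0..t}. sqrt (b\<^sup>2 + 2 * c0 * S s) \<noteq> 0"
  proof
    fix s assume "s \<in> {0..t}"
    then have "S s \<ge> 0" using S_nonneg_cond assms by blast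
    then have "b\<^sup>2 + 2 * c0 * S s > 0" using bpos c0_pos by (simp add: add_pos_nonneg)
    then show "sqrt (b\<^sup>2 + 2 * c0 * S s) \<noteq> 0" by simp
  qed
  have "continuous_on {0..t} (\<lambda>s. \<eta> / sqrt (b\<^sup>2 + 2 * c0 * S s))"
    by (rule continuous_on_divide[OF continuous_on_const c1 nz])
  then show ?thesis by (rule continuous_on_eq) (auto simp: gam_eq)
qed

lemma gam_pos_cond:
  assumes "t \<ge> 0" "\<forall>s\<in>{0..t}. R s \<ge> 0"
  shows "gam t > 0"
proof -
  have "S t \<ge> 0" using S_nonneg_cond assms by auto
  then have "b\<^sup>2 + 2 * c0 * S t > 0" using bpos c0_pos by (simp add: add_pos_nonneg)
  then show ?thesis using gam_eq assms etapos by simp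
qed

lemma duhamel_cond:
  assumes t: "t \<ge> 0" and Rnn: "\<forall>s\<in>{0..t}. R s \<ge> 0" and l: "l \<in> {0<..<1}"
  shows "D l t = exp (- (2*l*Gm t)) * (D l 0 + integral {0..t} (\<lambda>s. 2*l*(gam s)\<^sup>2 * R s * exp (2*l*Gm s)))"
proof -
  have gc: "continuous_on {0..t} gam" by (rule gam_cont_cond[OF t Rnn])
  have der: "((\<lambda>s. D l s * exp (2*l*Gm s)) has_real_derivative (2*l*(gam s)\<^sup>2 * R s * exp (2*l*Gm s))) (at s within {0..t})"
    if s: "s \<in> {0..t}" for s
  proof -
    have d1: "((\<lambda>s. D l s) has_real_derivative (- 2 * gam s * l * D l s + 2 * (gam s)\<^sup>2 * l * R s)) (at s within {0..t})"
      using Dder[OF l, of s] s by (auto intro: has_field_derivative_subset)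
    have d2: "(Gm has_real_derivative gam s) (at s within {0..t})"
      unfolding Gm_def by (rule integral_has_real_derivative[OF gc s])
    have "((\<lambda>s. D l s * exp (2*l*Gm s)) has_real_derivative
       ((- 2 * gam s * l * D l s + 2 * (gam s)\<^sup>2 * l * R s) * exp (2*l*Gm s) + D l s * (exp (2*l*Gm s) * (2*l*gam s)))) (at s within {0..t})"
    proof -
      have d3: "((\<lambda>s. exp (2*l*Gm s)) has_real_derivative (exp (2*l*Gm s) * (2*l*gam s))) (at s within {0..t})"
        using DERIV_chain2[OF DERIV_exp DERIV_cmult[OF d2, of "2*l"]] by simp
      show ?thesis using DERIV_mult[OF d1 d3] by (simp add: ac_simps)
    qed
    then show ?thesis by (simp add: algebra_simps power2_eq_square)
  qed
  have "((\<lambda>s. 2*l*(gam s)\<^sup>2 * R s * exp (2*l*Gm s)) has_integral (D l t * exp (2*l*Gm t) - D l 0 * exp (2*l*Gm 0))) {0..t}"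
    by (rule ftc_real[OF t der]) auto
  then have "integral {0..t} (\<lambda>s. 2*l*(gam s)\<^sup>2 * R s * exp (2*l*Gm s)) = D l t * exp (2*l*Gm t) - D l 0"
    by (simp add: integral_unique Gm0)
  then show ?thesis by (simp add: exp_minus field_simps)
qed

end

context adag begin

definition "cL = a * (1 - \<beta>) * exp (-1) / (2 * p)"

lemma cL_pos: "cL > 0" using apos beta p_pos by (simp add: cL_def)

lemma pd: "l \<in> {0<..<1} \<Longrightarrow> pl_density \<beta> l = (1 - \<beta>) * l powr (- \<beta>)"
  by (simp add: pl_density_def)

lemma powr_combine: "l > 0 \<Longrightarrow> l * l powr (- \<delta>) * l powr (- \<beta>) = l powr (1 - (\<beta> + \<delta>))"
  by (simp add: powr_add[symmetric] powr_diff algebra_simps) (simp add: powr_minus field_simps powr_add[symmetric])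

lemma lower_from_D:
  assumes t: "t \<ge> 0" and k: "k \<ge> 0"
    and Dl: "\<And>l. l \<in> {0<..<1} \<Longrightarrow> D l t \<ge> exp (- (k * l)) * (a * l powr (- \<delta>))"
  shows "R t \<ge> cL * (1 + k) powr (- p)"
proof -
  have r: "1 - (\<beta> + \<delta>) > -1" using alpha2 by simp
  have "integral {0<..<1} (\<lambda>l. a * (1 - \<beta>) * (l powr (1 - (\<beta> + \<delta>)) * exp (- (k * l)))) \<le> 2 * R t"
  proof (rule has_integral_le[OF integrable_integral hint[OF t]])
    show "(\<lambda>l. a * (1 - \<beta>) * (l powr (1 - (\<beta> + \<delta>)) * exp (- (k * l)))) integrable_on {0<..<1}"
      using integrable_on_cmult_left[OF powexp_integrable[OF r k], of "a * (1 - \<beta>)"] by simp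
    fix l :: real assume l: "l \<in> {0<..<1}"
    have "a * (1 - \<beta>) * (l powr (1 - (\<beta> + \<delta>)) * exp (- (k * l)))
        = (1 - \<beta>) * exp (- (k * l)) * a * (l * l powr (- \<delta>) * l powr (- \<beta>))"
      using l by (simp add: powr_combine)
    also have "\<dots> = l * (exp (- (k * l)) * (a * l powr (- \<delta>))) * ((1 - \<beta>) * l powr (- \<beta>))"
      by (simp add: algebra_simps)
    also have "\<dots> \<le> l * D l t * pl_density \<beta> l"
      using l Dl[OF l] beta by (simp add: pd mult_right_mono mult_left_mono)
    finally show "a * (1 - \<beta>) * (l powr (1 - (\<beta> + \<delta>)) * exp (- (k * l))) \<le> l * D l t * pl_density \<beta> l" .
  qed
  moreover have "integral {0<..<1} (\<lambda>l. a * (1 - \<beta>) * (l powr (1 - (\<beta> + \<delta>)) * exp (- (k * l))))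
     = a * (1 - \<beta>) * integral {0<..<1} (\<lambda>l. l powr (1 - (\<beta> + \<delta>)) * exp (- (k * l)))"
    by simp
  moreover have "exp (-1) * (1+k) powr (-(1 - (\<beta> + \<delta>)+1)) / (1 - (\<beta> + \<delta>)+1) \<le> integral {0<..<1} (\<lambda>l. l powr (1 - (\<beta> + \<delta>)) * exp (- (k * l)))"
    by (rule powexp_lower[OF r k])
  ultimately have "a * (1 - \<beta>) * (exp (-1) * (1+k) powr (- p) / p) \<le> 2 * R t"
    using apos beta by (smt (verit, best) mult_left_mono mult_nonneg_nonneg p_def)
  then show ?thesis by (simp add: cL_def field_simps)
qed

lemma Gm_nonneg_cond: "t \<ge> 0 \<Longrightarrow> \<forall>s\<in>{0..t}. R s \<ge> 0 \<Longrightarrow> Gm t \<ge> 0"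
  unfolding Gm_def using gam_cont_cond gam_pos_cond
  by (intro integral_nonneg integrable_continuous_real) (auto simp: less_imp_le)

lemma lower_cond:
  assumes t: "t \<ge> 0" and Rnn: "\<forall>s\<in>{0..t}. R s \<ge> 0"
  shows "R t \<ge> cL * (1 + 2 * Gm t) powr (- p)"
proof (rule lower_from_D[OF t])
  show "0 \<le> 2 * Gm t" using Gm_nonneg_cond[OF t Rnn] by simp
  fix l :: real assume l: "l \<in> {0<..<1}"
  have gc: "continuous_on {0..t} gam" by (rule gam_cont_cond[OF t Rnn])
  have Gc: "continuous_on {0..t} Gm" unfolding Gm_def
    by (rule indefinite_integral_continuous_1[OF integrable_continuous_real[OF gc]])
  have "integral {0..t} (\<lambda>s. 2*l*(gam s)\<^sup>2 * R s * exp (2*l*Gm s)) \<ge> 0"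
    using l Rnn by (intro integral_nonneg integrable_continuous_real continuous_intros gc Gc Rc) auto
  then have "D l 0 + integral {0..t} (\<lambda>s. 2*l*(gam s)\<^sup>2 * R s * exp (2*l*Gm s)) \<ge> a * l powr (- \<delta>)"
    using init l by (meson add_increasing2)
  then show "D l t \<ge> exp (- (2 * Gm t * l)) * (a * l powr (- \<delta>))"
    using duhamel_cond[OF t Rnn l] by (simp add: mult_left_mono ac_simps)
qed

lemma R0_pos: "R 0 > 0"
proof -
  have "R 0 \<ge> cL * (1 + 0) powr (- p)"
    by (rule lower_from_D) (use init in auto)
  then show ?thesis using cL_pos by simp
qed

lemma R_pos: "t \<ge> 0 \<Longrightarrow> R t > 0"
proof -
  assume t: "t \<ge> 0"
  show "R t > 0"
  proof (rule cont_induct[where f="\<lambda>_. 0" and g=R, OF continuous_on_const Rc R0_pos _ t])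
    fix t :: real assume t: "t \<ge> 0" and h: "\<forall>s\<in>{0..t}. 0 \<le> R s"
    have "R t \<ge> cL * (1 + 2 * Gm t) powr (- p)" by (rule lower_cond[OF t h])
    moreover have "cL * (1 + 2 * Gm t) powr (- p) > 0"
      using cL_pos Gm_nonneg_cond[OF t h] by simp
    ultimately show "0 < R t" by linarith
  qed
qed

lemma Rnn_all: "t \<ge> 0 \<Longrightarrow> \<forall>s\<in>{0..t}. R s \<ge> 0"
  using R_pos by (auto simp: less_imp_le)

lemma gam_cont: "continuous_on {0..t} gam"
proof (cases "t \<ge> 0")
  case True then show ?thesis using gam_cont_cond Rnn_all by blast
qed simp

lemma gam_pos: "t \<ge> 0 \<Longrightarrow> gam t > 0" using gam_pos_cond Rnn_all by blast
lemma Gm_nonneg: "t \<ge> 0 \<Longrightarrow> Gm t \<ge> 0" using Gm_nonneg_cond Rnn_all by blast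
lemma S_nonneg: "t \<ge> 0 \<Longrightarrow> S t \<ge> 0" using S_nonneg_cond Rnn_all by auto
lemma lower: "t \<ge> 0 \<Longrightarrow> R t \<ge> cL * (1 + 2 * Gm t) powr (- p)" using lower_cond Rnn_all by blast
lemma duhamel: "t \<ge> 0 \<Longrightarrow> l \<in> {0<..<1} \<Longrightarrow>
   D l t = exp (- (2*l*Gm t)) * (D l 0 + integral {0..t} (\<lambda>s. 2*l*(gam s)\<^sup>2 * R s * exp (2*l*Gm s)))"
  using duhamel_cond Rnn_all by blast

lemma Gm_der: "0 \<le> t \<Longrightarrow> t \<le> T \<Longrightarrow> (Gm has_real_derivative gam t) (at t within {0..T})"
  unfolding Gm_def by (rule integral_has_real_derivative[OF gam_cont]) auto

lemma Gm_cont: "continuous_on {0..T} Gm"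
  unfolding Gm_def by (rule indefinite_integral_continuous_1[OF integrable_continuous_real[OF gam_cont]])

end

context adag begin

lemma S_mono: "0 \<le> s \<Longrightarrow> s \<le> t \<Longrightarrow> S s \<le> S t"
  by (rule deriv_mono[of s t S R])
     (auto intro: has_field_derivative_subset[OF S_der[of _ t]] less_imp_le[OF R_pos])

lemma Gm_mono: "0 \<le> s \<Longrightarrow> s \<le> t \<Longrightarrow> Gm s \<le> Gm t"
  by (rule deriv_mono[of s t Gm gam])
     (auto intro: has_field_derivative_subset[OF Gm_der[of _ t]] less_imp_le[OF gam_pos])

lemma Qpos: "t \<ge> 0 \<Longrightarrow> b\<^sup>2 + 2 * c0 * S t > 0"
  using S_nonneg[of t] bpos c0_pos by (simp add: add_pos_nonneg)

lemma Qge: "t \<ge> 0 \<Longrightarrow> sqrt (b\<^sup>2 + 2 * c0 * S t) \<ge> b"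
  using S_nonneg[of t] bpos c0_pos by (simp add: real_le_rsqrt)

lemma gam_anti: "0 \<le> s \<Longrightarrow> s \<le> t \<Longrightarrow> gam t \<le> gam s"
proof -
  assume st: "0 \<le> s" "s \<le> t"
  have "sqrt (b\<^sup>2 + 2 * c0 * S s) \<le> sqrt (b\<^sup>2 + 2 * c0 * S t)"
    using S_mono[OF st] c0_pos by simp
  moreover have "sqrt (b\<^sup>2 + 2 * c0 * S s) > 0" using Qpos st by simp
  ultimately show ?thesis using gam_eq st etapos
    by (simp add: frac_le less_imp_le)
qed

definition "g0 = \<eta> / b"

lemma gam_le0: "t \<ge> 0 \<Longrightarrow> gam t \<le> g0"
  using gam_anti[of 0 t] gam_eq[of 0] S0 bpos by (simp add: g0_def)

definition "I t = integral {0..t} (\<lambda>s. (gam s)\<^sup>2 * R s)"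

lemma I_der: "0 \<le> t \<Longrightarrow> t \<le> T \<Longrightarrow> (I has_real_derivative (gam t)\<^sup>2 * R t) (at t within {0..T})"
  unfolding I_def by (rule integral_has_real_derivative) (auto intro!: continuous_intros gam_cont Rc)

definition "Q t = sqrt (b\<^sup>2 + 2 * c0 * S t)"

lemma Q_der: "0 \<le> t \<Longrightarrow> t \<le> T \<Longrightarrow> (Q has_real_derivative c0 * R t / Q t) (at t within {0..T})"
proof -
  assume t: "0 \<le> t" "t \<le> T"
  have "((\<lambda>s. sqrt (b\<^sup>2 + 2 * c0 * S s)) has_real_derivative
          (inverse (sqrt (b\<^sup>2 + 2 * c0 * S t)) / 2 * (2 * c0 * R t))) (at t within {0..T})"
    by (rule DERIV_chain2[OF DERIV_real_sqrt]) (use Qpos t in \<open>auto intro!: derivative_eq_intros S_der\<close>)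
  then show ?thesis unfolding Q_def by (simp add: field_simps)
qed

lemma gamQ: "t \<ge> 0 \<Longrightarrow> gam t = \<eta> / Q t" by (simp add: gam_eq Q_def)
lemma Qge': "t \<ge> 0 \<Longrightarrow> Q t \<ge> b" using Qge by (simp add: Q_def)
lemma Q0: "Q 0 = b" using bpos by (simp add: Q_def S0)

lemma I_closed: "t \<ge> 0 \<Longrightarrow> I t = (\<eta>\<^sup>2 / c0) * ln (Q t / b)"
proof -
  assume t: "t \<ge> 0"
  define F where "F s = (\<eta>\<^sup>2 / c0) * ln (Q s / b)" for s
  have "((\<lambda>s. (gam s)\<^sup>2 * R s) has_integral (F t - F 0)) {0..t}"
  proof (rule ftc_real[OF t])
    fix s assume s: "s \<in> {0..t}"
    have Qp: "Q s > 0" using Qge'[of s] bpos s by auto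
    have d1: "((\<lambda>s. Q s / b) has_real_derivative (c0 * R s / Q s) / b) (at s within {0..t})"
      using DERIV_cdivide[OF Q_der[of s t], of b] s by auto
    have d2: "((\<lambda>s. ln (Q s / b)) has_real_derivative inverse (Q s / b) * ((c0 * R s / Q s) / b)) (at s within {0..t})"
      by (rule DERIV_chain2[OF DERIV_ln d1]) (use Qp bpos in simp)
    have "(F has_real_derivative (\<eta>\<^sup>2 / c0) * ((c0 * R s / Q s) / b / (Q s / b))) (at s within {0..t})"
      unfolding F_def using DERIV_cmult[OF d2, of "\<eta>\<^sup>2 / c0"] by (simp add: divide_inverse ac_simps)
    moreover have "(\<eta>\<^sup>2 / c0) * ((c0 * R s / Q s) / b / (Q s / b)) = (gam s)\<^sup>2 * R s"
      using Qp bpos c0_pos s by (simp add: gamQ field_simps power2_eq_square)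
    ultimately show "(F has_real_derivative (gam s)\<^sup>2 * R s) (at s within {0..t})" by simp
  qed
  then show ?thesis using Q0 bpos by (simp add: I_def F_def integral_unique)
qed

lemma I_nonneg: "t \<ge> 0 \<Longrightarrow> I t \<ge> 0"
  unfolding I_def using R_pos
  by (intro integral_nonneg integrable_continuous_real continuous_intros gam_cont Rc) (auto simp: less_imp_le)

end

lemma alg1: "(z::real) < 1 \<Longrightarrow> ((1-z)*x1*x2 + (1-z)*(2*x3)*x4 + (1-z)*x5*(1/(2-z)))/2 = (1-z)*x1*x2/2 + (1-z)*x3*x4 + ((1-z)/(2-z))*x5/2"
  by (simp add: field_simps)

context adag begin

lemma pw1: "l > 0 \<Longrightarrow> l * l powr (- \<beta>) = l powr (1 - \<beta>)"
  using powr_add[of l 1 "-\<beta>"] by simp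
lemma pw2: "l > 0 \<Longrightarrow> l * l * l powr (- \<beta>) = l powr (2 - \<beta>)"
  using powr_add[of l 2 "-\<beta>"] by (simp add: power2_eq_square powr_numeral[symmetric])

lemma upper_from_D:
  assumes t: "t \<ge> 0" and k1: "k1 \<ge> 0" and k2: "k2 \<ge> 0" and X: "X \<ge> 0" and Y: "Y \<ge> 0"
    and Dl: "\<And>l. l \<in> {0<..<1} \<Longrightarrow> D l t \<le> A * l powr (- \<delta>) * exp (- (k1 * l)) + 2 * X * l * exp (- (k2 * l)) + Y"
  shows "R t \<le> (1 - \<beta>) * A * CE (1 - (\<beta> + \<delta>)) * (1 + k1) powr (- p) / 2
               + (1 - \<beta>) * X * CE (2 - \<beta>) * (1 + k2) powr (- (3 - \<beta>)) + c0 * Y / 2"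
proof -
  have r1: "1 - (\<beta> + \<delta>) > -1" using alpha2 by simp
  have r2: "2 - \<beta> > -1" "1 - \<beta> > -1" using beta by auto
  define f1 where "f1 l = l powr (1 - (\<beta> + \<delta>)) * exp (- (k1 * l))" for l
  define f2 where "f2 l = l powr (2 - \<beta>) * exp (- (k2 * l))" for l
  define f3 where "f3 l = l powr (1 - \<beta>)" for l
  have i1: "f1 integrable_on {0<..<1}" unfolding f1_def by (rule powexp_integrable[OF r1 k1])
  have i2: "f2 integrable_on {0<..<1}" unfolding f2_def by (rule powexp_integrable[OF r2(1) k2])
  have h3: "(f3 has_integral 1/(2 - \<beta>)) {0<..<1}" unfolding f3_def using powr_hi01[OF r2(2)] by simp
  define g where "g l = (1-\<beta>) * A * f1 l + (1-\<beta>) * (2 * X) * f2 l + (1 - \<beta>) * Y * f3 l" for l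
  have hg: "(g has_integral ((1-\<beta>) * A * integral {0<..<1} f1 + (1-\<beta>) * (2 * X) * integral {0<..<1} f2
                + (1 - \<beta>) * Y * (1/(2-\<beta>)))) {0<..<1}"
    unfolding g_def
    by (intro has_integral_add has_integral_mult_right integrable_integral i1 i2 h3)
  have "2 * R t \<le> (1-\<beta>) * A * integral {0<..<1} f1 + (1-\<beta>) * (2 * X) * integral {0<..<1} f2
                + (1 - \<beta>) * Y * (1/(2-\<beta>))"
  proof (rule has_integral_le[OF hint[OF t] hg])
    fix l :: real assume l: "l \<in> {0<..<1}"
    then have lp: "l > 0" by simp
    have "l * D l t * pl_density \<beta> l = (1 - \<beta>) * (l * l powr (- \<beta>)) * D l t" using l by (simp add: pd)
    also have "\<dots> \<le> (1 - \<beta>) * (l * l powr (- \<beta>)) * (A * l powr (- \<delta>) * exp (- (k1 * l)) + 2 * X * l * exp (- (k2 * l)) + Y)"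
      using Dl[OF l] beta lp by (intro mult_left_mono) auto
    also have "\<dots> = (1-\<beta>)*A*((l*l powr (-\<delta>)*l powr (-\<beta>))*exp(-(k1*l))) + (1-\<beta>)*(2*X)*((l*l*l powr (-\<beta>))*exp(-(k2*l))) + (1-\<beta>)*Y*(l*l powr (-\<beta>))"
      by (simp add: algebra_simps)
    also have "\<dots> = g l"
      unfolding g_def f1_def f2_def f3_def by (simp only: powr_combine[OF lp] pw2[OF lp] pw1[OF lp])
    finally show "l * D l t * pl_density \<beta> l \<le> g l" .
  qed
  moreover have "integral {0<..<1} f1 \<le> CE (1 - (\<beta> + \<delta>)) * (1 + k1) powr (- p)"
  proof -
    have e: "-(1 - (\<beta> + \<delta>) + 1) = - p" by (simp add: p_def)
    show ?thesis using powexp_upper[OF r1 k1, unfolded e] unfolding f1_def .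
  qed
  moreover have "integral {0<..<1} f2 \<le> CE (2 - \<beta>) * (1 + k2) powr (- (3 - \<beta>))"
    using powexp_upper[OF r2(1) k2] unfolding f2_def by (simp add: algebra_simps)
  ultimately have R2: "2 * R t \<le> (1-\<beta>) * A * (CE (1 - (\<beta> + \<delta>)) * (1 + k1) powr (- p))
       + (1-\<beta>) * (2 * X) * (CE (2 - \<beta>) * (1 + k2) powr (- (3 - \<beta>))) + (1 - \<beta>) * Y * (1/(2-\<beta>))"
    using beta Apos X by (smt (verit) mult_left_mono mult_nonneg_nonneg)
  have "R t \<le> ((1-\<beta>) * A * (CE (1 - (\<beta> + \<delta>)) * (1 + k1) powr (- p))
       + (1-\<beta>) * (2 * X) * (CE (2 - \<beta>) * (1 + k2) powr (- (3 - \<beta>))) + (1 - \<beta>) * Y * (1/(2-\<beta>))) / 2"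
    using divide_right_mono[OF R2, of 2] by simp
  also have "\<dots> = (1 - \<beta>) * A * (CE (1 - (\<beta> + \<delta>)) * (1 + k1) powr (- p)) / 2
               + (1 - \<beta>) * X * (CE (2 - \<beta>) * (1 + k2) powr (- (3 - \<beta>))) + ((1-\<beta>)/(2-\<beta>)) * Y / 2"
    by (rule alg1[OF beta])
  finally show ?thesis by (simp add: c0_def pl_mean_def mult.assoc)
qed

definition "KA = (1 - \<beta>) * A * CE (1 - (\<beta> + \<delta>)) / 2"
definition "KB = (1 - \<beta>) * CE (2 - \<beta>)"

lemma KA_pos: "KA > 0" using beta Apos CE_pos[of "1 - (\<beta> + \<delta>)"] alpha2 by (simp add: KA_def)
lemma KB_pos: "KB > 0" using beta CE_pos[of "2 - \<beta>"] by (simp add: KB_def)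

lemma apriori: "t \<ge> 0 \<Longrightarrow> R t \<le> KA + KB * I t"
proof -
  assume t: "t \<ge> 0"
  have "R t \<le> (1 - \<beta>) * A * CE (1 - (\<beta> + \<delta>)) * (1 + 0) powr (- p) / 2
               + (1 - \<beta>) * I t * CE (2 - \<beta>) * (1 + 0) powr (- (3 - \<beta>)) + c0 * 0 / 2"
  proof (rule upper_from_D[OF t _ _ I_nonneg[OF t]])
    fix l :: real assume l: "l \<in> {0<..<1}"
    have Gt: "Gm t \<ge> 0" using Gm_nonneg t by simp
    have "integral {0..t} (\<lambda>s. 2*l*(gam s)\<^sup>2 * R s * exp (2*l*Gm s))
        \<le> integral {0..t} (\<lambda>s. (2*l*exp (2*l*Gm t)) * ((gam s)\<^sup>2 * R s))"
    proof (rule integral_le)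
      show "(\<lambda>s. 2*l*(gam s)\<^sup>2 * R s * exp (2*l*Gm s)) integrable_on {0..t}"
        by (intro integrable_continuous_real continuous_intros gam_cont Rc Gm_cont)
      show "(\<lambda>s. (2*l*exp (2*l*Gm t)) * ((gam s)\<^sup>2 * R s)) integrable_on {0..t}"
        by (intro integrable_continuous_real continuous_intros gam_cont Rc)
      fix s assume s: "s \<in> {0..t}"
      have "exp (2*l*Gm s) \<le> exp (2*l*Gm t)" using Gm_mono[of s t] s l by (simp add: mult_left_mono)
      then show "2*l*(gam s)\<^sup>2 * R s * exp (2*l*Gm s) \<le> (2*l*exp (2*l*Gm t)) * ((gam s)\<^sup>2 * R s)"
        using R_pos[of s] s l by (simp add: mult_left_mono algebra_simps less_imp_le)
    qed
    also have "\<dots> = 2*l*exp (2*l*Gm t) * I t" by (simp add: I_def)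
    finally have J: "integral {0..t} (\<lambda>s. 2*l*(gam s)\<^sup>2 * R s * exp (2*l*Gm s)) \<le> 2*l*exp (2*l*Gm t) * I t" .
    have D0: "D l 0 \<le> A * l powr (- \<delta>)" using init l by blast
    have "D l 0 + integral {0..t} (\<lambda>s. 2*l*(gam s)\<^sup>2 * R s * exp (2*l*Gm s)) \<le> A * l powr (- \<delta>) + 2*l*exp (2*l*Gm t) * I t"
      using D0 J by linarith
    then have "exp (- (2*l*Gm t)) * (D l 0 + integral {0..t} (\<lambda>s. 2*l*(gam s)\<^sup>2 * R s * exp (2*l*Gm s))) \<le> exp (- (2*l*Gm t)) * (A * l powr (- \<delta>) + 2*l*exp (2*l*Gm t) * I t)"
      by (rule mult_left_mono) simp
    then have "D l t \<le> exp (- (2*l*Gm t)) * (A * l powr (- \<delta>) + 2*l*exp (2*l*Gm t) * I t)"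
      using duhamel[OF t l] by simp
    also have "\<dots> = exp (- (2*l*Gm t)) * (A * l powr (- \<delta>)) + 2*l*I t"
      by (simp add: algebra_simps exp_minus)
    also have "\<dots> \<le> A * l powr (- \<delta>) + 2*l*I t"
      using Gt l Apos by (intro add_right_mono mult_left_le_one_le) auto
    finally show "D l t \<le> A * l powr (- \<delta>) * exp (- (0 * l)) + 2 * I t * l * exp (- (0 * l)) + 0"
      by (simp add: algebra_simps)
  qed auto
  then show ?thesis by (simp add: KA_def KB_def algebra_simps)
qed

definition "KQ = c0 * KA / b + KB * \<eta>\<^sup>2 / b"
lemma KQ_pos: "KQ > 0" unfolding KQ_def using c0_pos KA_pos KB_pos bpos etapos
  by (intro add_pos_pos divide_pos_pos mult_pos_pos) auto

lemma Q_lin: "t \<ge> 0 \<Longrightarrow> Q t \<le> b + KQ * t"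
proof -
  assume t: "t \<ge> 0"
  have "(\<lambda>s. b + KQ * s - Q s) 0 \<le> (\<lambda>s. b + KQ * s - Q s) t"
  proof (rule deriv_mono[OF t])
    fix s assume s: "s \<in> {0..t}"
    show "((\<lambda>s. b + KQ * s - Q s) has_real_derivative KQ - c0 * R s / Q s) (at s within {0..t})"
      using s by (auto intro!: derivative_eq_intros Q_der)
    have Qb: "Q s \<ge> b" using Qge' s by simp
    have Qp: "Q s > 0" using Qb bpos by simp
    have "c0 * R s / Q s \<le> c0 * (KA + KB * ((\<eta>\<^sup>2 / c0) * ln (Q s / b))) / Q s"
      using apriori[of s] I_closed[of s] s c0_pos Qp by (intro divide_right_mono mult_left_mono) auto
    also have "\<dots> = c0 * KA / Q s + KB * \<eta>\<^sup>2 * (ln (Q s / b) / Q s)"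
    proof -
      have "c0 * (KB * ((\<eta>\<^sup>2 / c0) * ln (Q s / b))) = KB * \<eta>\<^sup>2 * ln (Q s / b)" using c0_pos by simp
      then have "c0 * (KA + KB * ((\<eta>\<^sup>2 / c0) * ln (Q s / b))) = c0 * KA + KB * \<eta>\<^sup>2 * ln (Q s / b)"
        by (simp add: distrib_left)
      then show ?thesis by (simp add: add_divide_distrib)
    qed
    also have "\<dots> \<le> c0 * KA / b + KB * \<eta>\<^sup>2 * (1 / b)"
    proof (intro add_mono mult_left_mono)
      show "c0 * KA / Q s \<le> c0 * KA / b" using Qb bpos c0_pos KA_pos
        by (intro divide_left_mono) auto
      have "ln (Q s / b) \<le> Q s / b" using Qp bpos by (intro ln_le_minus_one[THEN order_trans]) auto
      then show "ln (Q s / b) / Q s \<le> 1 / b" using Qp bpos by (simp add: field_simps)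
    qed (use KB_pos in auto)
    finally show "0 \<le> KQ - c0 * R s / Q s" by (simp add: KQ_def)
  qed
  then show ?thesis using Q0 by simp
qed

lemma Gm_log: "t \<ge> 0 \<Longrightarrow> Gm t \<ge> (\<eta> / KQ) * ln (1 + KQ * t / b)"
proof -
  assume t: "t \<ge> 0"
  have "(\<lambda>s. Gm s - (\<eta> / KQ) * ln (1 + KQ * s / b)) 0 \<le> (\<lambda>s. Gm s - (\<eta> / KQ) * ln (1 + KQ * s / b)) t"
  proof (rule deriv_mono[OF t])
    fix s assume s: "s \<in> {0..t}"
    have pos: "1 + KQ * s / b > 0" using s KQ_pos bpos by (simp add: add_pos_nonneg)
    show "((\<lambda>s. Gm s - (\<eta> / KQ) * ln (1 + KQ * s / b)) has_real_derivative
            gam s - (\<eta> / KQ) * (KQ / b / (1 + KQ * s / b))) (at s within {0..t})"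
      using s pos by (auto intro!: derivative_eq_intros Gm_der simp: field_simps)
    have "(\<eta> / KQ) * (KQ / b / (1 + KQ * s / b)) = \<eta> / (b + KQ * s)"
      using KQ_pos bpos pos by (simp add: field_simps)
    also have "\<dots> \<le> \<eta> / Q s"
      using Q_lin[of s] s Qge'[of s] bpos etapos by (intro divide_left_mono) auto
    also have "\<dots> = gam s" using gamQ s by simp
    finally show "0 \<le> gam s - (\<eta> / KQ) * (KQ / b / (1 + KQ * s / b))" by simp
  qed
  then show ?thesis using Gm0 by simp
qed

lemma Gm_unbounded: "\<exists>T\<ge>0. Gm T \<ge> G"
proof -
  define T where "T = b * (exp (max G 0 * KQ / \<eta>) - 1) / KQ"
  have T: "T \<ge> 0" using KQ_pos bpos etapos by (simp add: T_def)
  have "1 + KQ * T / b = exp (max G 0 * KQ / \<eta>)" using KQ_pos bpos by (simp add: T_def)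
  then have "(\<eta> / KQ) * ln (1 + KQ * T / b) = max G 0" using KQ_pos etapos by simp
  then show ?thesis using Gm_log[OF T] T by (intro exI[of _ T]) auto
qed

end

lemma alg2: "(z::real) < 1 \<Longrightarrow> p > 0 \<Longrightarrow> (1-z)*x1*(e*w/p) + (1-z)*Z*(1/(2-z)) - (1-z)*Z*(C*u) \<le> 2*Rt \<Longrightarrow>
   x1*(1-z)*e/(2*p) * w + ((1-z)/(2-z))*Z/2 - (1-z)*Z*C*u/2 \<le> Rt"
  by (simp add: field_simps)

context adag begin

lemma lower_from_D2:
  assumes t: "t \<ge> 0" and k: "k \<ge> 0" and Z: "Z \<ge> 0"
    and Dl: "\<And>l. l \<in> {0<..<1} \<Longrightarrow> D l t \<ge> a * l powr (- \<delta>) * exp (- (k * l)) + Z * (1 - exp (- (k * l)))"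
  shows "R t \<ge> cL * (1 + k) powr (- p) + c0 * Z / 2 - (1 - \<beta>) * Z * CE (1 - \<beta>) * (1 + k) powr (- (2 - \<beta>)) / 2"
proof -
  have r1: "1 - (\<beta> + \<delta>) > -1" using alpha2 by simp
  have r3: "1 - \<beta> > -1" using beta by auto
  define f1 where "f1 l = l powr (1 - (\<beta> + \<delta>)) * exp (- (k * l))" for l
  define f3 where "f3 l = l powr (1 - \<beta>)" for l
  define f4 where "f4 l = l powr (1 - \<beta>) * exp (- (k * l))" for l
  have i1: "f1 integrable_on {0<..<1}" unfolding f1_def by (rule powexp_integrable[OF r1 k])
  have i4: "f4 integrable_on {0<..<1}" unfolding f4_def by (rule powexp_integrable[OF r3 k])
  have h3: "(f3 has_integral 1/(2 - \<beta>)) {0<..<1}" unfolding f3_def using powr_hi01[OF r3] by simp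
  define g where "g l = (1-\<beta>) * a * f1 l + (1-\<beta>) * Z * f3 l - (1 - \<beta>) * Z * f4 l" for l
  have hg: "(g has_integral ((1-\<beta>) * a * integral {0<..<1} f1 + (1-\<beta>) * Z * (1/(2-\<beta>))
                - (1 - \<beta>) * Z * integral {0<..<1} f4)) {0<..<1}"
    unfolding g_def
    by (intro has_integral_add has_integral_diff has_integral_mult_right integrable_integral i1 i4 h3)
  have R2: "(1-\<beta>) * a * integral {0<..<1} f1 + (1-\<beta>) * Z * (1/(2-\<beta>))
                - (1 - \<beta>) * Z * integral {0<..<1} f4 \<le> 2 * R t"
  proof (rule has_integral_le[OF hg hint[OF t]])
    fix l :: real assume l: "l \<in> {0<..<1}"
    then have lp: "l > 0" by simp
    have "g l = (1 - \<beta>) * (l * l powr (- \<beta>)) * (a * l powr (- \<delta>) * exp (- (k * l)) + Z * (1 - exp (- (k * l))))"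
    proof -
      have "g l = (1-\<beta>)*a*((l*l powr (-\<delta>)*l powr (-\<beta>))*exp(-(k*l))) + (1-\<beta>)*Z*(l*l powr (-\<beta>)) - (1-\<beta>)*Z*((l*l powr (-\<beta>))*exp(-(k*l)))"
        unfolding g_def f1_def f3_def f4_def by (simp only: powr_combine[OF lp] pw1[OF lp])
      then show ?thesis by (simp add: algebra_simps)
    qed
    also have "\<dots> \<le> (1 - \<beta>) * (l * l powr (- \<beta>)) * D l t"
      using Dl[OF l] beta lp by (intro mult_left_mono) auto
    also have "\<dots> = l * D l t * pl_density \<beta> l" using l by (simp add: pd)
    finally show "g l \<le> l * D l t * pl_density \<beta> l" .
  qed
  have e1: "-(1 - (\<beta> + \<delta>) + 1) = - p" "1 - (\<beta> + \<delta>) + 1 = p" by (simp_all add: p_def)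
  have L1: "exp (-1) * (1+k) powr (-p) / p \<le> integral {0<..<1} f1"
    unfolding f1_def using powexp_lower[OF r1 k] unfolding e1 .
  have L4: "integral {0<..<1} f4 \<le> CE (1 - \<beta>) * (1 + k) powr (- (2 - \<beta>))"
    using powexp_upper[OF r3 k] unfolding f4_def by (simp add: algebra_simps)
  have "(1-\<beta>) * a * (exp (-1) * (1+k) powr (-p) / p) + (1-\<beta>) * Z * (1/(2-\<beta>))
                - (1 - \<beta>) * Z * (CE (1 - \<beta>) * (1 + k) powr (- (2 - \<beta>))) \<le> 2 * R t"
  proof -
    have "(1-\<beta>) * a * (exp (-1) * (1+k) powr (-p) / p) \<le> (1-\<beta>) * a * integral {0<..<1} f1"
      using L1 beta apos by (intro mult_left_mono) auto
    moreover have "(1 - \<beta>) * Z * integral {0<..<1} f4 \<le> (1 - \<beta>) * Z * (CE (1 - \<beta>) * (1 + k) powr (- (2 - \<beta>)))"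
      using L4 beta Z by (intro mult_left_mono) auto
    ultimately show ?thesis using R2 by linarith
  qed
  from alg2[OF beta p_pos this] show ?thesis by (simp add: cL_def c0_def pl_mean_def)
qed

lemma subcrit: "\<exists>T1\<ge>0. gam T1 < 2 / c0"
proof (rule ccontr)
  assume "\<not> (\<exists>T1\<ge>0. gam T1 < 2 / c0)"
  then have big: "\<And>t. t \<ge> 0 \<Longrightarrow> gam t \<ge> 2 / c0" by force
  define Sc where "Sc = (\<eta> * c0 / 2)\<^sup>2 / (2 * c0)"
  have Sb: "S t \<le> Sc" if t: "t \<ge> 0" for t
  proof -
    have Qp: "Q t > 0" using Qge'[OF t] bpos by simp
    have "2 / c0 \<le> \<eta> / Q t" using big[OF t] gamQ[OF t] by simp
    then have "Q t \<le> \<eta> * c0 / 2" using Qp c0_pos by (simp add: field_simps)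
    then have "(Q t)\<^sup>2 \<le> (\<eta> * c0 / 2)\<^sup>2" using Qp by (intro power_mono) auto
    moreover have "(Q t)\<^sup>2 = b\<^sup>2 + 2 * c0 * S t" using Qpos[OF t] by (simp add: Q_def)
    ultimately show ?thesis using c0_pos bpos by (simp add: Sc_def field_simps) (use zero_le_power2[of b] in linarith)
  qed
  define ms where "ms = cL * c0 / ((1 - \<beta>) * CE (1 - \<beta>))"
  have ms: "ms > 0" using cL_pos c0_pos beta CE_pos[of "1-\<beta>"] by (simp add: ms_def)
  define m where "m = min (R 0 / 2) (ms / 2)"
  have m: "m > 0" "m < R 0" "m < ms" using R0_pos ms by (auto simp: m_def)
  have Rm: "m < R t" if t: "t \<ge> 0" for t
  proof (rule cont_induct[where f="\<lambda>_. m" and g=R, OF continuous_on_const Rc m(2) _ t])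
    fix t :: real assume t: "t \<ge> 0" and h: "\<forall>s\<in>{0..t}. m \<le> R s"
    have Gt: "Gm t \<ge> 0" using Gm_nonneg[OF t] .
    have "R t \<ge> cL * (1 + 2 * Gm t) powr (- p) + c0 * (2 * m / c0) / 2 - (1 - \<beta>) * (2 * m / c0) * CE (1 - \<beta>) * (1 + 2 * Gm t) powr (- (2 - \<beta>)) / 2"
    proof (rule lower_from_D2[OF t])
      show "0 \<le> 2 * Gm t" "0 \<le> 2 * m / c0" using Gt m c0_pos by auto
      fix l :: real assume l: "l \<in> {0<..<1}"
      have Ec: "((\<lambda>s. 2*l*gam s * exp (2*l*Gm s)) has_integral (exp (2*l*Gm t) - exp (2*l*Gm 0))) {0..t}"
      proof (rule ftc_real[OF t])
        fix s assume s: "s \<in> {0..t}"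
        show "((\<lambda>s. exp (2*l*Gm s)) has_real_derivative 2*l*gam s * exp (2*l*Gm s)) (at s within {0..t})"
          using DERIV_chain2[OF DERIV_exp DERIV_cmult[OF Gm_der[of s t], of "2*l"]] s by (simp add: ac_simps)
      qed
      have "integral {0..t} (\<lambda>s. (2*m/c0) * (2*l*gam s * exp (2*l*Gm s))) \<le> integral {0..t} (\<lambda>s. 2*l*(gam s)\<^sup>2 * R s * exp (2*l*Gm s))"
      proof (rule integral_le)
        show "(\<lambda>s. (2*m/c0) * (2*l*gam s * exp (2*l*Gm s))) integrable_on {0..t}"
          using has_integral_mult_right[OF Ec, of "2*m/c0"] by blast
        show "(\<lambda>s. 2*l*(gam s)\<^sup>2 * R s * exp (2*l*Gm s)) integrable_on {0..t}"
          by (intro integrable_continuous_real continuous_intros gam_cont Rc Gm_cont)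
        fix s assume s: "s \<in> {0..t}"
        have g: "gam s \<ge> 2 / c0" "gam s > 0" using big gam_pos s by auto
        have "(2/c0) * m \<le> gam s * R s" using g h s m by (intro mult_mono) auto
        then have "gam s * ((2/c0) * m) \<le> gam s * (gam s * R s)" using g by (intro mult_left_mono) auto
        then have "(2*m/c0) * gam s \<le> (gam s)\<^sup>2 * R s" by (simp add: power2_eq_square algebra_simps)
        then have "(2*m/c0) * gam s * (2*l*exp (2*l*Gm s)) \<le> (gam s)\<^sup>2 * R s * (2*l*exp (2*l*Gm s))"
          using l by (intro mult_right_mono) auto
        then show "(2*m/c0) * (2*l*gam s * exp (2*l*Gm s)) \<le> 2*l*(gam s)\<^sup>2 * R s * exp (2*l*Gm s)"
          by (simp add: algebra_simps)
      qed
      moreover have "integral {0..t} (\<lambda>s. (2*m/c0) * (2*l*gam s * exp (2*l*Gm s))) = (2*m/c0) * (exp (2*l*Gm t) - 1)"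
      proof -
        have "integral {0..t} (\<lambda>s. (2*m/c0) * (2*l*gam s * exp (2*l*Gm s))) = (2*m/c0) * (exp (2*l*Gm t) - exp (2*l*Gm 0))"
          by (rule integral_unique[OF has_integral_mult_right[OF Ec]])
        then show ?thesis by (simp only: Gm0 mult_zero_right exp_zero)
      qed
      moreover have "a * l powr (- \<delta>) \<le> D l 0" using init l by blast
      ultimately have "a * l powr (- \<delta>) + (2*m/c0) * (exp (2*l*Gm t) - 1) \<le> D l 0 + integral {0..t} (\<lambda>s. 2*l*(gam s)\<^sup>2 * R s * exp (2*l*Gm s))"
        by linarith
      then have "exp (- (2*l*Gm t)) * (a * l powr (- \<delta>) + (2*m/c0) * (exp (2*l*Gm t) - 1)) \<le> D l t"
        using duhamel[OF t l] by (simp add: mult_left_mono)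
      moreover have "exp (- (2*l*Gm t)) * (a * l powr (- \<delta>) + (2*m/c0) * (exp (2*l*Gm t) - 1))
          = a * l powr (- \<delta>) * exp (- (2 * Gm t * l)) + 2 * m / c0 * (1 - exp (- (2 * Gm t * l)))"
        by (simp add: algebra_simps exp_minus field_simps)
      ultimately show "a * l powr (- \<delta>) * exp (- (2 * Gm t * l)) + 2 * m / c0 * (1 - exp (- (2 * Gm t * l))) \<le> D l t"
        by simp
    qed
    moreover have "(1 + 2 * Gm t) powr (- (2 - \<beta>)) \<le> (1 + 2 * Gm t) powr (- p)"
      using Gt delta by (intro powr_mono) (auto simp: p_def)
    moreover have "(1 - \<beta>) * (2 * m / c0) * CE (1 - \<beta>) / 2 < cL"
    proof -
      have "m * ((1 - \<beta>) * CE (1 - \<beta>)) < ms * ((1 - \<beta>) * CE (1 - \<beta>))"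
        using m beta CE_pos[of "1-\<beta>"] by (intro mult_strict_right_mono) auto
      also have "\<dots> = cL * c0" using beta CE_pos[of "1-\<beta>"] by (simp add: ms_def)
      finally show ?thesis using c0_pos by (simp add: field_simps)
    qed
    moreover have "(1 + 2 * Gm t) powr (- p) > 0" using Gt by simp
    moreover have "c0 * (2 * m / c0) / 2 = m" using c0_pos by simp
    moreover have "(1 - \<beta>) * (2 * m / c0) * CE (1 - \<beta>) * (1 + 2 * Gm t) powr (- (2 - \<beta>)) / 2
        = ((1 - \<beta>) * (2 * m / c0) * CE (1 - \<beta>) / 2) * (1 + 2 * Gm t) powr (- (2 - \<beta>))" by simp
    moreover have "((1 - \<beta>) * (2 * m / c0) * CE (1 - \<beta>) / 2) * (1 + 2 * Gm t) powr (- (2 - \<beta>))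
        \<le> ((1 - \<beta>) * (2 * m / c0) * CE (1 - \<beta>) / 2) * (1 + 2 * Gm t) powr (- p)"
      using calculation(2) c0_pos m beta CE_pos[of "1-\<beta>"] by (intro mult_left_mono) auto
    moreover have "((1 - \<beta>) * (2 * m / c0) * CE (1 - \<beta>) / 2) * (1 + 2 * Gm t) powr (- p) < cL * (1 + 2 * Gm t) powr (- p)"
      using calculation(3,4) by (intro mult_strict_right_mono) auto
    ultimately show "m < R t" by linarith
  qed
  define t where "t = Sc / m + 1"
  have t: "t \<ge> 0" using m Sb[of 0] S0 by (simp add: t_def)
  have "(\<lambda>s. S s - m * s) 0 \<le> (\<lambda>s. S s - m * s) t"
  proof (rule deriv_mono[OF t])
    fix s assume s: "s \<in> {0..t}"
    show "((\<lambda>s. S s - m * s) has_real_derivative R s - m) (at s within {0..t})"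
      using s by (auto intro!: derivative_eq_intros S_der)
    show "0 \<le> R s - m" using Rm[of s] s by simp
  qed
  then have "S t \<ge> m * t" using S0 by simp
  moreover have "m * t = Sc + m" using m by (simp add: t_def field_simps)
  ultimately show False using Sb[OF t] m by simp
qed

end

context adag begin

definition "w t = 1 + 2 * Gm t"

lemma R_nn: "t \<ge> 0 \<Longrightarrow> R t \<ge> 0" using R_pos[of t] by simp

lemma w_ge1: "t \<ge> 0 \<Longrightarrow> w t \<ge> 1" using Gm_nonneg by (simp add: w_def)
lemma w_mono: "0 \<le> s \<Longrightarrow> s \<le> t \<Longrightarrow> w s \<le> w t" using Gm_mono by (simp add: w_def)

lemma I_mono: assumes "0 \<le> s" "s \<le> t" shows "I s \<le> I t"
proof (rule deriv_mono[of s t I "\<lambda>s. (gam s)\<^sup>2 * R s"])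
  fix x assume x: "x \<in> {s..t}"
  show "(I has_real_derivative (gam x)\<^sup>2 * R x) (at x within {s..t})"
    using x assms by (intro has_field_derivative_subset[OF I_der[of x t]]) auto
  show "0 \<le> (gam x)\<^sup>2 * R x" using R_nn[of x] x assms by simp
qed (use assms in auto)

lemma I0: "I 0 = 0" by (simp add: I_def)

lemma Ibound:
  assumes t: "t \<ge> 0" and M: "M \<ge> 0" and H: "\<forall>s\<in>{0..t}. R s \<le> M * w s powr (- p)"
    and q: "0 < q" "q \<le> p" "q < 1"
  shows "I t \<le> g0 * M * w t powr (1 - q) / (2 * (1 - q))"
proof -
  define F where "F s = g0 * M * w s powr (1 - q) / (2 * (1 - q)) - I s" for s
  have "F 0 \<le> F t"
  proof (rule deriv_mono[OF t])
    fix s assume s: "s \<in> {0..t}"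
    have wp: "w s > 0" using w_ge1[of s] s by simp
    have dw: "(w has_real_derivative 2 * gam s) (at s within {0..t})"
      unfolding w_def using s by (auto intro!: derivative_eq_intros Gm_der)
    have dwq: "((\<lambda>s. w s powr (1 - q)) has_real_derivative (1 - q) * w s powr (1 - q - 1) * (2 * gam s)) (at s within {0..t})"
      by (rule DERIV_chain2[OF has_real_derivative_powr[OF wp] dw])
    have d1: "((\<lambda>s. g0 * M * w s powr (1-q) / (2*(1-q))) has_real_derivative g0*M*((1-q)*w s powr (1-q-1)*(2*gam s))/(2*(1-q))) (at s within {0..t})"
      using DERIV_cdivide[OF DERIV_cmult[OF dwq, of "g0*M"], of "2*(1-q)"] by simp
    show "(F has_real_derivative (g0 * M * ((1 - q) * w s powr (1 - q - 1) * (2 * gam s)) / (2 * (1 - q)) - (gam s)\<^sup>2 * R s)) (at s within {0..t})"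
      unfolding F_def using DERIV_diff[OF d1 I_der[of s t]] s by simp
    have g: "0 < gam s" "gam s \<le> g0" using gam_pos gam_le0 s by auto
    have "R s \<le> M * w s powr (- p)" using H s by auto
    also have "\<dots> \<le> M * w s powr (- q)" using w_ge1[of s] s q M by (intro mult_left_mono powr_mono) auto
    finally have "gam s * R s \<le> g0 * (M * w s powr (- q))"
      using g R_pos[of s] s M by (intro mult_mono) auto
    then have "gam s * (gam s * R s) \<le> gam s * (g0 * (M * w s powr (- q)))"
      using g by (intro mult_left_mono) auto
    moreover have "g0 * M * ((1 - q) * w s powr (1 - q - 1) * (2 * gam s)) / (2 * (1 - q)) = gam s * (g0 * (M * w s powr (- q)))"
      using q by (simp add: field_simps)
    ultimately show "0 \<le> g0 * M * ((1 - q) * w s powr (1 - q - 1) * (2 * gam s)) / (2 * (1 - q)) - (gam s)\<^sup>2 * R s"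
      by (simp add: power2_eq_square)
  qed
  moreover have "F 0 \<ge> 0" using I0 g0_def etapos bpos M q w_ge1[of 0] by (simp add: F_def)
  ultimately show ?thesis by (simp add: F_def)
qed

lemma Dsplit:
  assumes t: "t \<ge> 0" and s0: "s0 \<in> {0..t}" and Y: "Y \<ge> 0"
    and HY: "\<forall>s\<in>{s0..t}. gam s * R s \<le> Y" and l: "l \<in> {0<..<1}"
  shows "D l t \<le> A * l powr (- \<delta>) * exp (- ((2 * Gm t) * l)) + 2 * I t * l * exp (- ((2 * (Gm t - Gm s0)) * l)) + Y"
proof -
  define f where "f s = 2*l*(gam s)\<^sup>2 * R s * exp (2*l*Gm s)" for s
  have fc: "continuous_on {0..t} f" unfolding f_def by (intro continuous_intros gam_cont Rc Gm_cont)
  have fi: "f integrable_on {0..t}" by (rule integrable_continuous_real[OF fc])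
  have split: "integral {0..s0} f + integral {s0..t} f = integral {0..t} f"
    by (rule Henstock_Kurzweil_Integration.integral_combine) (use s0 fi in auto)
  have J1: "integral {0..s0} f \<le> 2*l*exp (2*l*Gm s0) * I s0"
  proof -
    have "integral {0..s0} f \<le> integral {0..s0} (\<lambda>s. (2*l*exp (2*l*Gm s0)) * ((gam s)\<^sup>2 * R s))"
    proof (rule integral_le)
      show "f integrable_on {0..s0}" by (rule integrable_on_subinterval[OF fi]) (use s0 in auto)
      show "(\<lambda>s. (2*l*exp (2*l*Gm s0)) * ((gam s)\<^sup>2 * R s)) integrable_on {0..s0}"
        by (intro integrable_continuous_real continuous_intros gam_cont Rc)
      fix s assume s: "s \<in> {0..s0}"
      have "exp (2*l*Gm s) \<le> exp (2*l*Gm s0)" using Gm_mono[of s s0] s l by (simp add: mult_left_mono)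
      then show "f s \<le> (2*l*exp (2*l*Gm s0)) * ((gam s)\<^sup>2 * R s)"
        unfolding f_def using R_pos[of s] s l by (simp add: mult_left_mono algebra_simps less_imp_le)
    qed
    then show ?thesis by (simp add: I_def)
  qed
  have Ec: "((\<lambda>s. 2*l*gam s * exp (2*l*Gm s)) has_integral (exp (2*l*Gm t) - exp (2*l*Gm s0))) {s0..t}"
  proof (rule ftc_real)
    show "s0 \<le> t" using s0 by simp
    fix s assume s: "s \<in> {s0..t}"
    show "((\<lambda>s. exp (2*l*Gm s)) has_real_derivative 2*l*gam s * exp (2*l*Gm s)) (at s within {s0..t})"
      using DERIV_chain2[OF DERIV_exp DERIV_cmult[OF Gm_der[of s t], of "2*l"]] s s0
      by (auto simp: ac_simps intro: has_field_derivative_subset)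
  qed
  have J2: "integral {s0..t} f \<le> Y * (exp (2*l*Gm t) - exp (2*l*Gm s0))"
  proof -
    have "integral {s0..t} f \<le> integral {s0..t} (\<lambda>s. Y * (2*l*gam s * exp (2*l*Gm s)))"
    proof (rule integral_le)
      show "f integrable_on {s0..t}" by (rule integrable_on_subinterval[OF fi]) (use s0 in auto)
      show "(\<lambda>s. Y * (2*l*gam s * exp (2*l*Gm s))) integrable_on {s0..t}"
        using has_integral_mult_right[OF Ec, of Y] by blast
      fix s assume s: "s \<in> {s0..t}"
      have "gam s * R s \<le> Y" using HY s by auto
      then have "gam s * (gam s * R s) \<le> gam s * Y" using gam_pos[of s] s s0 by (intro mult_left_mono) auto
      then have "(gam s)\<^sup>2 * R s * (2*l*exp (2*l*Gm s)) \<le> gam s * Y * (2*l*exp (2*l*Gm s))"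
        using l by (intro mult_right_mono) (auto simp: power2_eq_square algebra_simps)
      then show "f s \<le> Y * (2*l*gam s * exp (2*l*Gm s))" unfolding f_def by (simp add: algebra_simps)
    qed
    also have "\<dots> = Y * (exp (2*l*Gm t) - exp (2*l*Gm s0))"
      by (rule integral_unique[OF has_integral_mult_right[OF Ec]])
    finally show ?thesis .
  qed
  have D0: "D l 0 \<le> A * l powr (- \<delta>)" using init l by blast
  have Is: "I s0 \<le> I t" using I_mono s0 by auto
  have "D l 0 + integral {0..t} f \<le> A * l powr (- \<delta>) + 2*l*exp (2*l*Gm s0) * I t + Y * exp (2*l*Gm t)"
  proof -
    have "2*l*exp (2*l*Gm s0) * I s0 \<le> 2*l*exp (2*l*Gm s0) * I t" using Is l by (intro mult_left_mono) auto
    moreover have "Y * (exp (2*l*Gm t) - exp (2*l*Gm s0)) \<le> Y * exp (2*l*Gm t)" using Y by (simp add: mult_left_mono)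
    ultimately show ?thesis using D0 J1 J2 split by linarith
  qed
  then have "exp (- (2*l*Gm t)) * (D l 0 + integral {0..t} f) \<le> exp (- (2*l*Gm t)) * (A * l powr (- \<delta>) + 2*l*exp (2*l*Gm s0) * I t + Y * exp (2*l*Gm t))"
    by (rule mult_left_mono) simp
  moreover have "exp (- (2*l*Gm t)) * (A * l powr (- \<delta>) + 2*l*exp (2*l*Gm s0) * I t + Y * exp (2*l*Gm t))
     = A * l powr (- \<delta>) * exp (- ((2 * Gm t) * l)) + 2 * I t * l * exp (- ((2 * (Gm t - Gm s0)) * l)) + Y"
    by (simp add: algebra_simps exp_minus exp_diff field_simps)
  moreover have "D l t = exp (- (2*l*Gm t)) * (D l 0 + integral {0..t} f)"
    using duhamel[OF t l] unfolding f_def by simp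
  ultimately show ?thesis by linarith
qed

end

context adag begin

lemma w_cont: "continuous_on {0..T} w" unfolding w_def by (intro continuous_intros Gm_cont)

lemma wp_cont: "continuous_on {0..T} (\<lambda>t. M * w t powr (- p))"
proof -
  have "continuous_on {0..T} (\<lambda>t. w t powr (- p))"
    by (rule continuous_on_powr'[OF w_cont continuous_on_const]) (use w_ge1 in force)
  then show ?thesis by (rule continuous_on_mult[OF continuous_on_const])
qed

lemma bootstrap: "\<exists>M>0. \<forall>t\<ge>0. R t \<le> M * w t powr (- p)"
proof -
  obtain T1 where T1: "T1 \<ge> 0" "gam T1 < 2 / c0" using subcrit by blast
  define \<theta>1 where "\<theta>1 = c0 * gam T1 / 2"
  have th1: "0 < \<theta>1" "\<theta>1 < 1" using T1 gam_pos[OF T1(1)] c0_pos by (auto simp: \<theta>1_def field_simps)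
  define \<theta>' where "\<theta>' = (1 + \<theta>1) / 2"
  have th': "\<theta>1 < \<theta>'" "\<theta>' < 1" "0 < \<theta>'" using th1 by (auto simp: \<theta>'_def)
  define \<rho> where "\<rho> = \<theta>1 / \<theta>'"
  have rho: "0 < \<rho>" "\<rho> < 1" using th1 th' by (auto simp: \<rho>_def)
  define \<epsilon> where "\<epsilon> = 1 - \<rho> powr (1/p)"
  have rp: "0 < \<rho> powr (1/p)" "\<rho> powr (1/p) < 1"
    using rho p_pos powr_less_mono2[of "1/p" \<rho> 1] by auto
  have eps: "0 < \<epsilon>" "\<epsilon> < 1" using rp by (auto simp: \<epsilon>_def)
  have epsp: "\<theta>1 * (1 - \<epsilon>) powr (- p) = \<theta>'"
  proof -
    have "(1 - \<epsilon>) powr (- p) = \<rho> powr (1/p * (- p))" by (simp add: \<epsilon>_def powr_powr)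
    also have "\<dots> = \<rho> powr (-1)" using p_pos by simp
    also have "\<dots> = \<theta>' / \<theta>1" using rho th1 th' by (simp add: powr_neg_one \<rho>_def)
    finally show ?thesis using th1 by simp
  qed
  define q where "q = min p (1/2)"
  have q: "0 < q" "q \<le> p" "q < 1" "q \<le> 1/2" using p_pos by (auto simp: q_def)
  define K2 where "K2 = KB * g0 * \<epsilon> powr (- (3 - \<beta>)) / (2 * (1 - q))"
  have K2: "K2 > 0" using KB_pos eps q etapos bpos by (simp add: K2_def g0_def)
  have dq: "\<delta> + q > 0" using delta q by simp
  define W where "W = max 1 ((2 * K2 / (1 - \<theta>')) powr (1 / (\<delta> + q)))"
  have Wsmall: "K2 * x powr (- (\<delta> + q)) \<le> (1 - \<theta>') / 2" if x: "x \<ge> W" for x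
  proof -
    define V where "V = (2 * K2 / (1 - \<theta>')) powr (1 / (\<delta> + q))"
    have Vp: "V > 0" using K2 th' by (simp add: V_def)
    have "V \<le> x" using x by (simp add: W_def V_def)
    then have "x powr (- (\<delta> + q)) \<le> V powr (- (\<delta> + q))" using Vp dq by (intro powr_mono2') auto
    also have "V powr (- (\<delta> + q)) = (2 * K2 / (1 - \<theta>')) powr (1 / (\<delta> + q) * (- (\<delta> + q)))"
      by (simp add: V_def powr_powr)
    also have "\<dots> = (2 * K2 / (1 - \<theta>')) powr (-1)"
    proof -
      have ex: "1 / (\<delta> + q) * (- (\<delta> + q)) = -1" using dq by (simp add: field_simps)
      show ?thesis unfolding ex ..
    qed
    also have "\<dots> = (1 - \<theta>') / (2 * K2)" using K2 th' by (simp add: powr_neg_one)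
    finally show ?thesis using K2 by (simp add: field_simps)
  qed
  define G where "G = max ((W - 1) / 2) (Gm T1 / (1 - \<epsilon>) + 1)"
  obtain T3 where T3: "T3 \<ge> 0" "Gm T3 \<ge> G" using Gm_unbounded by blast
  obtain Rm where Rm: "\<forall>s\<in>{0..T3}. R s \<le> Rm"
    using continuous_attains_sup[OF compact_Icc _ Rc[of T3]] T3 by (metis atLeastAtMost_iff empty_iff order_refl)
  have Gnn: "G \<ge> 0" using Gm_nonneg[OF T1(1)] eps by (simp add: G_def le_max_iff_disj)
  define M where "M = max (2 * KA / (1 - \<theta>') + 1) (Rm * (1 + 2 * G) powr p + 1)"
  have Rm0: "Rm > 0" using Rm R0_pos T3 by (meson atLeastAtMost_iff less_le_trans order_refl)
  have M1: "M > 2 * KA / (1 - \<theta>')" "M > Rm * (1 + 2 * G) powr p" by (auto simp: M_def)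
  have Mpos: "M > 0" using M1(1) KA_pos th' by (smt (verit) divide_pos_pos)
  have claim: "R t < M * w t powr (- p)" if t: "t \<ge> 0" for t
  proof (rule cont_induct[where f=R and g="\<lambda>t. M * w t powr (- p)", OF Rc wp_cont _ _ t])
    show "R 0 < M * w 0 powr (- p)"
    proof -
      have "R 0 \<le> Rm" using Rm T3 by auto
      also have "Rm \<le> Rm * (1 + 2 * G) powr p"
        using Rm0 Gnn ge_one_powr_ge_zero[of "1 + 2 * G" p] p_pos by simp
      also have "\<dots> < M" using M1 by simp
      finally show ?thesis by (simp add: w_def Gm0)
    qed
  next
    fix t :: real assume t: "t \<ge> 0" and H: "\<forall>s\<in>{0..t}. R s \<le> M * w s powr (- p)"
    have wt: "w t \<ge> 1" using w_ge1[OF t] .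
    show "R t < M * w t powr (- p)"
    proof (cases "Gm t < G")
      case True
      have tT3: "t \<le> T3"
      proof (rule ccontr)
        assume "\<not> t \<le> T3"
        then have "Gm T3 \<le> Gm t" using Gm_mono T3 by auto
        then show False using True T3 by simp
      qed
      have "R t \<le> Rm" using Rm t tT3 by auto
      also have "Rm = (Rm * (1 + 2 * G) powr p) * (1 + 2 * G) powr (- p)"
        using Gnn by (simp add: powr_minus field_simps)
      also have "\<dots> < M * (1 + 2 * G) powr (- p)"
        using M1(2) Gnn by (intro mult_strict_right_mono) auto
      also have "\<dots> \<le> M * w t powr (- p)"
        using True Mpos wt p_pos by (intro mult_left_mono powr_mono2') (auto simp: w_def)
      finally show ?thesis .
    next
      case False
      then have GG: "Gm t \<ge> G" by simp
      have Gt: "Gm t \<ge> 0" using Gm_nonneg[OF t] .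
      have le1: "(1 - \<epsilon>) * Gm t \<le> Gm t" using eps Gt mult_right_mono[of "1 - \<epsilon>" 1 "Gm t"] by simp
      obtain s0 where s0: "s0 \<ge> 0" "s0 \<le> t" "Gm s0 = (1 - \<epsilon>) * Gm t"
        using IVT'[of Gm 0 "(1 - \<epsilon>) * Gm t" t] Gm0 Gt eps t Gm_cont[of t] le1
        by auto
      have s0T1: "s0 \<ge> T1"
      proof (rule ccontr)
        assume "\<not> s0 \<ge> T1"
        then have "Gm s0 \<le> Gm T1" using Gm_mono[of s0 T1] s0 by linarith
        moreover have "Gm T1 < (1 - \<epsilon>) * G"
        proof -
          have "Gm T1 / (1 - \<epsilon>) + 1 \<le> G" by (simp add: G_def)
          then have "(1 - \<epsilon>) * (Gm T1 / (1 - \<epsilon>) + 1) \<le> (1 - \<epsilon>) * G" using eps by (intro mult_left_mono) auto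
          moreover have "(1 - \<epsilon>) * (Gm T1 / (1 - \<epsilon>) + 1) = Gm T1 + (1 - \<epsilon>)"
            using eps by (simp add: field_simps)
          ultimately show ?thesis using eps by linarith
        qed
        moreover have "(1 - \<epsilon>) * G \<le> (1 - \<epsilon>) * Gm t" using GG eps by (intro mult_left_mono) auto
        ultimately show False using s0 by simp
      qed
      define Y where "Y = gam T1 * (M * w s0 powr (- p))"
      have ws0: "w s0 \<ge> 1" using w_ge1 s0 by simp
      have Y: "Y \<ge> 0" using gam_pos[OF T1(1)] Mpos by (simp add: Y_def)
      have HY: "\<forall>s\<in>{s0..t}. gam s * R s \<le> Y"
      proof
        fix s assume s: "s \<in> {s0..t}"
        have "gam s \<le> gam T1" using gam_anti[of T1 s] s s0T1 T1 by simp
        moreover have "R s \<le> M * w s0 powr (- p)"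
        proof -
          have "R s \<le> M * w s powr (- p)" using H s s0 by auto
          also have "\<dots> \<le> M * w s0 powr (- p)"
            using w_mono[of s0 s] s s0 ws0 Mpos p_pos by (intro mult_left_mono powr_mono2') auto
          finally show ?thesis .
        qed
        ultimately show "gam s * R s \<le> Y" unfolding Y_def
          using gam_pos[of s] R_pos[of s] s s0 by (intro mult_mono) auto
      qed
      have Rt: "R t \<le> (1 - \<beta>) * A * CE (1 - (\<beta> + \<delta>)) * (1 + 2 * Gm t) powr (- p) / 2
               + (1 - \<beta>) * I t * CE (2 - \<beta>) * (1 + 2 * \<epsilon> * Gm t) powr (- (3 - \<beta>)) + c0 * Y / 2"
      proof (rule upper_from_D[OF t _ _ I_nonneg[OF t] Y])
        show "0 \<le> 2 * Gm t" "0 \<le> 2 * \<epsilon> * Gm t" using Gt eps by auto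
        fix l :: real assume l: "l \<in> {0<..<1}"
        have "2 * (Gm t - Gm s0) = 2 * \<epsilon> * Gm t" using s0 by (simp add: algebra_simps)
        then show "D l t \<le> A * l powr (- \<delta>) * exp (- (2 * Gm t * l)) + 2 * I t * l * exp (- (2 * \<epsilon> * Gm t * l)) + Y"
          using Dsplit[OF t _ Y HY l] s0 by simp
      qed
      have a: "(1 - \<beta>) * A * CE (1 - (\<beta> + \<delta>)) * (1 + 2 * Gm t) powr (- p) / 2 = KA * w t powr (- p)"
        by (simp add: KA_def w_def)
      have b: "(1 - \<beta>) * I t * CE (2 - \<beta>) * (1 + 2 * \<epsilon> * Gm t) powr (- (3 - \<beta>)) \<le> ((1 - \<theta>') / 2) * M * w t powr (- p)"
      proof -
        have e1: "1 + 2 * \<epsilon> * Gm t \<ge> \<epsilon> * w t" using eps Gt by (simp add: w_def algebra_simps)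
        have "(1 + 2 * \<epsilon> * Gm t) powr (- (3 - \<beta>)) \<le> (\<epsilon> * w t) powr (- (3 - \<beta>))"
          using e1 eps wt beta by (intro powr_mono2') auto
        also have "\<dots> = \<epsilon> powr (- (3 - \<beta>)) * w t powr (- (3 - \<beta>))"
          using eps wt by (simp add: powr_mult)
        finally have E: "(1 + 2 * \<epsilon> * Gm t) powr (- (3 - \<beta>)) \<le> \<epsilon> powr (- (3 - \<beta>)) * w t powr (- (3 - \<beta>))" .
        have Ib: "I t \<le> g0 * M * w t powr (1 - q) / (2 * (1 - q))"
          by (rule Ibound[OF t _ H q(1-3)]) (use Mpos in simp)
        have "(1 - \<beta>) * I t * CE (2 - \<beta>) * (1 + 2 * \<epsilon> * Gm t) powr (- (3 - \<beta>))
            = KB * (I t * (1 + 2 * \<epsilon> * Gm t) powr (- (3 - \<beta>)))" by (simp add: KB_def)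
        also have "\<dots> \<le> KB * ((g0 * M * w t powr (1 - q) / (2 * (1 - q))) * (\<epsilon> powr (- (3 - \<beta>)) * w t powr (- (3 - \<beta>))))"
          using Ib E KB_pos I_nonneg[OF t] by (intro mult_left_mono mult_mono) auto
        also have "\<dots> = K2 * M * (w t powr (1 - q) * w t powr (- (3 - \<beta>)))"
          by (simp add: K2_def field_simps)
        also have "w t powr (1 - q) * w t powr (- (3 - \<beta>)) = w t powr (- p) * w t powr (- (\<delta> + q))"
          using wt by (simp add: powr_add[symmetric] p_def algebra_simps)
        also have "K2 * M * (w t powr (- p) * w t powr (- (\<delta> + q))) = (K2 * w t powr (- (\<delta> + q))) * M * w t powr (- p)"
          by simp
        also have "\<dots> \<le> ((1 - \<theta>') / 2) * M * w t powr (- p)"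
        proof -
          have "w t \<ge> W"
          proof -
            have "(W - 1) / 2 \<le> G" by (simp add: G_def)
            then show ?thesis using GG by (simp add: w_def)
          qed
          then show ?thesis using Wsmall Mpos by (intro mult_right_mono) auto
        qed
        finally show ?thesis .
      qed
      have c: "c0 * Y / 2 \<le> \<theta>' * M * w t powr (- p)"
      proof -
        have e2: "w s0 \<ge> (1 - \<epsilon>) * w t" using s0 eps Gt by (simp add: w_def algebra_simps)
        have "w s0 powr (- p) \<le> ((1 - \<epsilon>) * w t) powr (- p)"
          using e2 eps wt p_pos by (intro powr_mono2') auto
        also have "\<dots> = (1 - \<epsilon>) powr (- p) * w t powr (- p)" using eps wt by (simp add: powr_mult)
        finally have "w s0 powr (- p) \<le> (1 - \<epsilon>) powr (- p) * w t powr (- p)" .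
        then have "\<theta>1 * M * w s0 powr (- p) \<le> \<theta>1 * M * ((1 - \<epsilon>) powr (- p) * w t powr (- p))"
          using th1 Mpos by (intro mult_left_mono) auto
        also have "\<dots> = \<theta>' * M * w t powr (- p)" using epsp by (simp add: algebra_simps)
        finally show ?thesis by (simp add: Y_def \<theta>1_def algebra_simps)
      qed
      have "R t \<le> KA * w t powr (- p) + ((1 - \<theta>') / 2) * M * w t powr (- p) + \<theta>' * M * w t powr (- p)"
        using Rt a b c by linarith
      also have "\<dots> = (KA + M * (1 + \<theta>') / 2) * w t powr (- p)" by (simp add: field_simps)
      also have "\<dots> < M * w t powr (- p)"
      proof (rule mult_strict_right_mono)
        have "KA < M * (1 - \<theta>') / 2" using M1(1) th' by (simp add: field_simps)
        then show "KA + M * (1 + \<theta>') / 2 < M" by (simp add: field_simps)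
      qed (use wt in simp)
      finally show ?thesis .
    qed
  qed
  show ?thesis using claim Mpos by (intro exI[of _ M]) (auto simp: less_imp_le)
qed

end

lemma deriv_anti:
  assumes "a \<le> b" "\<And>x. x \<in> {a..b} \<Longrightarrow> (f has_real_derivative f' x) (at x within {a..b})"
    and "\<And>x. x \<in> {a..b} \<Longrightarrow> f' x \<le> 0"
  shows "f b \<le> f a"
proof -
  have "(\<lambda>x. - f x) a \<le> (\<lambda>x. - f x) b"
    by (rule deriv_mono[OF assms(1), of _ "\<lambda>x. - f' x"]) (use assms in \<open>auto intro!: derivative_eq_intros\<close>)
  then show ?thesis by simp
qed

context adag begin

lemma w_der: "0 \<le> t \<Longrightarrow> t \<le> T \<Longrightarrow> (w has_real_derivative 2 * gam t) (at t within {0..T})"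
  unfolding w_def by (auto intro!: derivative_eq_intros Gm_der)

lemma g0_pos: "g0 > 0" using etapos bpos by (simp add: g0_def)

lemma w0: "w 0 = 1" by (simp add: w_def Gm0)

lemma w_upper: "t \<ge> 0 \<Longrightarrow> w t \<le> 1 + 2 * g0 * t"
proof -
  assume t: "t \<ge> 0"
  have "(\<lambda>s. 1 + 2 * g0 * s - w s) 0 \<le> (\<lambda>s. 1 + 2 * g0 * s - w s) t"
  proof (rule deriv_mono[OF t])
    fix s assume s: "s \<in> {0..t}"
    show "((\<lambda>s. 1 + 2 * g0 * s - w s) has_real_derivative 2 * g0 - 2 * gam s) (at s within {0..t})"
      using s by (auto intro!: derivative_eq_intros w_der)
    show "0 \<le> 2 * g0 - 2 * gam s" using gam_le0[of s] s by simp
  qed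
  then show ?thesis using w0 by simp
qed

lemma w_lower: "t \<ge> 0 \<Longrightarrow> (\<forall>s\<in>{0..t}. gam s \<ge> g) \<Longrightarrow> w t \<ge> 1 + 2 * g * t"
proof -
  assume t: "t \<ge> 0" and g: "\<forall>s\<in>{0..t}. gam s \<ge> g"
  have "(\<lambda>s. w s - 2 * g * s) 0 \<le> (\<lambda>s. w s - 2 * g * s) t"
  proof (rule deriv_mono[OF t])
    fix s assume s: "s \<in> {0..t}"
    show "((\<lambda>s. w s - 2 * g * s) has_real_derivative 2 * gam s - 2 * g) (at s within {0..t})"
      using s by (auto intro!: derivative_eq_intros w_der)
    show "0 \<le> 2 * gam s - 2 * g" using g s by simp
  qed
  then show ?thesis using w0 by simp
qed

lemma Q_pos: "t \<ge> 0 \<Longrightarrow> Q t > 0" using Qge'[of t] bpos by simp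

lemma wpow_der: "0 \<le> t \<Longrightarrow> t \<le> T \<Longrightarrow>
   ((\<lambda>s. w s powr e) has_real_derivative e * w t powr (e - 1) * (2 * gam t)) (at t within {0..T})"
  using w_ge1[of t] by (intro DERIV_chain2[OF has_real_derivative_powr w_der]) auto

lemma case1:
  assumes a1: "\<beta> + \<delta> < 1"
  shows "(\<exists>g. g > 0 \<and> (\<forall>t\<ge>0. gam t \<ge> g)) \<and> asymp_ge1 R (\<lambda>t. t powr (\<beta> + \<delta> - 2))"
proof -
  obtain M where M: "M > 0" "\<forall>t\<ge>0. R t \<le> M * w t powr (- p)" using bootstrap by blast
  have p1: "p > 1" using a1 by (simp add: p_def)
  define KK where "KK = c0 * M / (\<eta> * (p - 1))"
  have KK: "KK > 0" using c0_pos M etapos p1 by (simp add: KK_def)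
  have Qb: "Q t \<le> b + KK" if t: "t \<ge> 0" for t
  proof -
    have "(\<lambda>s. Q s + KK * w s powr (1 - p)) t \<le> (\<lambda>s. Q s + KK * w s powr (1 - p)) 0"
    proof (rule deriv_anti[OF t])
      fix s assume s: "s \<in> {0..t}"
      show "((\<lambda>s. Q s + KK * w s powr (1 - p)) has_real_derivative
              c0 * R s / Q s + KK * ((1 - p) * w s powr (1 - p - 1) * (2 * gam s))) (at s within {0..t})"
        using s by (intro DERIV_add Q_der DERIV_cmult wpow_der) auto
      have Qp: "Q s > 0" using Q_pos s by simp
      have "KK * ((1 - p) * w s powr (1 - p - 1) * (2 * gam s)) = - 2 * c0 * M * w s powr (- p) / Q s"
        using p1 etapos Qp s by (simp add: KK_def gamQ field_simps)
      moreover have "c0 * R s \<le> 2 * c0 * M * w s powr (- p)"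
      proof -
        have "R s \<le> M * w s powr (- p)" using M(2) s by auto
        also have "\<dots> \<le> 2 * (M * w s powr (- p))" using M(1) by simp
        finally show ?thesis using c0_pos by (simp add: mult_left_mono)
      qed
      ultimately have "c0 * R s / Q s + KK * ((1 - p) * w s powr (1 - p - 1) * (2 * gam s)) = (c0 * R s - 2 * c0 * M * w s powr (- p)) / Q s"
        "c0 * R s - 2 * c0 * M * w s powr (- p) \<le> 0"
        by (simp_all add: diff_divide_distrib)
      then show "c0 * R s / Q s + KK * ((1 - p) * w s powr (1 - p - 1) * (2 * gam s)) \<le> 0"
        using Qp by (simp add: divide_nonpos_pos)
    qed
    then have A': "Q t + KK * w t powr (1 - p) \<le> b + KK" using Q0 w0 by simp
    have "KK * w t powr (1 - p) \<ge> 0" using KK by simp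
    then show ?thesis using A' by linarith
  qed
  define gL where "gL = \<eta> / (b + KK)"
  have gL: "gL > 0" using etapos bpos KK by (simp add: gL_def)
  have gamL: "gam t \<ge> gL" if "t \<ge> 0" for t
    using Qb[OF that] Q_pos[OF that] gamQ[OF that] etapos bpos KK
    by (simp add: gL_def divide_left_mono)
  have asy: "asymp_ge1 R (\<lambda>t. t powr (\<beta> + \<delta> - 2))"
    unfolding asymp_ge1_def
  proof (intro exI conjI allI impI)
    show "0 < cL * (1 + 2 * g0) powr (- p)" using cL_pos g0_pos by simp
    show "0 < M * (2 * gL) powr (- p)" using M gL by simp
    fix t :: real assume t1: "1 \<le> t"
    then have t: "t \<ge> 0" by simp
    have e: "t powr (\<beta> + \<delta> - 2) = t powr (- p)" by (simp add: p_def)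
    have "1 + 2 * g0 * t \<le> (1 + 2 * g0) * t" using t1 by (simp add: algebra_simps)
    then have wu: "w t \<le> (1 + 2 * g0) * t" using w_upper[OF t] by linarith
    have wl: "w t \<ge> 2 * gL * t" using w_lower[OF t, of gL] gamL by auto
    have "cL * (1 + 2 * g0) powr (- p) * t powr (- p) = cL * ((1 + 2 * g0) * t) powr (- p)"
      using t g0_def etapos bpos by (simp add: powr_mult)
    also have "\<dots> \<le> cL * w t powr (- p)"
      using wu w_ge1[OF t] cL_pos p_pos by (intro mult_left_mono powr_mono2') auto
    also have "\<dots> \<le> R t" using lower[OF t] by (simp add: w_def)
    finally show "cL * (1 + 2 * g0) powr (- p) * t powr (\<beta> + \<delta> - 2) \<le> R t" using e by simp
    have "R t \<le> M * w t powr (- p)" using M t by auto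
    also have "\<dots> \<le> M * (2 * gL * t) powr (- p)"
      using wl gL t1 M p_pos by (intro mult_left_mono powr_mono2') auto
    also have "\<dots> = M * (2 * gL) powr (- p) * t powr (- p)" using gL t by (simp add: powr_mult)
    finally show "R t \<le> M * (2 * gL) powr (- p) * t powr (\<beta> + \<delta> - 2)" using e by simp
  qed
  show ?thesis using gamL gL asy by blast
qed

end

context adag begin

lemma lowerw: "t \<ge> 0 \<Longrightarrow> R t \<ge> cL * w t powr (- p)" using lower by (simp add: w_def)

lemma case2:
  assumes a1: "1 < \<beta> + \<delta>" and a2: "\<beta> + \<delta> < 2"
  shows "asymp_ge1 gam (\<lambda>t. t powr (- 1 + 1 / (\<beta> + \<delta>))) \<and> asymp_ge1 R (\<lambda>t. t powr (- 2 / (\<beta> + \<delta>) + 1))"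
proof -
  define \<alpha> where "\<alpha> = \<beta> + \<delta>"
  have al: "1 < \<alpha>" "\<alpha> < 2" using a1 a2 by (auto simp: \<alpha>_def)
  have pa: "p = 2 - \<alpha>" "0 < 1 - p" "1 - p = \<alpha> - 1" using al by (auto simp: p_def \<alpha>_def)
  obtain M where M: "M > 0" "\<forall>t\<ge>0. R t \<le> M * w t powr (- p)" using bootstrap by blast
  define KU where "KU = c0 * M / (\<eta> * (1 - p))"
  have KU: "KU > 0" using c0_pos M etapos pa by (simp add: KU_def)
  define KLo where "KLo = c0 * cL / (2 * \<eta> * (1 - p))"
  have KLo: "KLo > 0" using c0_pos cL_pos etapos pa by (simp add: KLo_def)
  have wq1: "w t powr (1 - p) \<ge> 1" if "t \<ge> 0" for t
    using w_ge1[OF that] pa ge_one_powr_ge_zero by simp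
  have Qup: "Q t \<le> (b + KU) * w t powr (1 - p)" if t: "t \<ge> 0" for t
  proof -
    have "(\<lambda>s. Q s - KU * w s powr (1 - p)) t \<le> (\<lambda>s. Q s - KU * w s powr (1 - p)) 0"
    proof (rule deriv_anti[OF t])
      fix s assume s: "s \<in> {0..t}"
      show "((\<lambda>s. Q s - KU * w s powr (1 - p)) has_real_derivative
              c0 * R s / Q s - KU * ((1 - p) * w s powr (1 - p - 1) * (2 * gam s))) (at s within {0..t})"
        using s by (intro DERIV_diff Q_der DERIV_cmult wpow_der) auto
      have Qp: "Q s > 0" using Q_pos s by simp
      have e: "KU * ((1 - p) * w s powr (1 - p - 1) * (2 * gam s)) = 2 * c0 * M * w s powr (- p) / Q s"
        using pa etapos Qp s by (simp add: KU_def gamQ field_simps)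
      have "c0 * R s \<le> 2 * c0 * M * w s powr (- p)"
      proof -
        have "R s \<le> M * w s powr (- p)" using M(2) s by auto
        also have "\<dots> \<le> 2 * (M * w s powr (- p))" using M(1) by simp
        finally show ?thesis using c0_pos by (simp add: mult_left_mono)
      qed
      then have "c0 * R s / Q s \<le> 2 * c0 * M * w s powr (- p) / Q s" using Qp by (simp add: divide_right_mono)
      then show "c0 * R s / Q s - KU * ((1 - p) * w s powr (1 - p - 1) * (2 * gam s)) \<le> 0" using e by simp
    qed
    then have A: "Q t \<le> b - KU + KU * w t powr (1 - p)" using Q0 w0 by simp
    have "b - KU + KU * w t powr (1 - p) \<le> (b + KU) * w t powr (1 - p)"
      using wq1[OF t] bpos KU by (simp add: algebra_simps) (smt (verit) mult_le_cancel_left1)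
    then show ?thesis using A by linarith
  qed
  have Qlo: "Q t \<ge> min b KLo * w t powr (1 - p)" if t: "t \<ge> 0" for t
  proof -
    have "(\<lambda>s. Q s - KLo * w s powr (1 - p)) 0 \<le> (\<lambda>s. Q s - KLo * w s powr (1 - p)) t"
    proof (rule deriv_mono[OF t])
      fix s assume s: "s \<in> {0..t}"
      show "((\<lambda>s. Q s - KLo * w s powr (1 - p)) has_real_derivative
              c0 * R s / Q s - KLo * ((1 - p) * w s powr (1 - p - 1) * (2 * gam s))) (at s within {0..t})"
        using s by (intro DERIV_diff Q_der DERIV_cmult wpow_der) auto
      have Qp: "Q s > 0" using Q_pos s by simp
      have e: "KLo * ((1 - p) * w s powr (1 - p - 1) * (2 * gam s)) = c0 * cL * w s powr (- p) / Q s"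
        using pa etapos Qp s by (simp add: KLo_def gamQ field_simps)
      have "c0 * cL * w s powr (- p) \<le> c0 * R s" using lowerw[of s] s c0_pos by (simp add: mult_left_mono)
      then have "c0 * cL * w s powr (- p) / Q s \<le> c0 * R s / Q s" using Qp by (simp add: divide_right_mono)
      then show "0 \<le> c0 * R s / Q s - KLo * ((1 - p) * w s powr (1 - p - 1) * (2 * gam s))" using e by simp
    qed
    then have A: "Q t \<ge> b - KLo + KLo * w t powr (1 - p)" using Q0 w0 by simp
    have "min b KLo * w t powr (1 - p) \<le> b - KLo + KLo * w t powr (1 - p)"
    proof (cases "b \<le> KLo")
      case True
      have "0 \<le> (KLo - b) * (w t powr (1 - p) - 1)" using True wq1[OF t] by simp
      then show ?thesis using True by (simp add: algebra_simps)
    next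
      case False then show ?thesis by simp
    qed
    then show ?thesis using A by linarith
  qed
  define K1 where "K1 = b + KU"
  define k1 where "k1 = min b KLo"
  have K1: "K1 > 0" using bpos KU by (simp add: K1_def)
  have k1: "k1 > 0" using bpos KLo by (simp add: k1_def)
  define V where "V t = w t powr \<alpha>" for t
  define cA where "cA = 2 * \<alpha> * \<eta> / K1"
  define CA where "CA = 2 * \<alpha> * \<eta> / k1"
  have cA: "cA > 0" using al etapos K1 by (simp add: cA_def)
  have CA: "CA > 0" using al etapos k1 by (simp add: CA_def)
  have Vder: "(V has_real_derivative 2 * \<alpha> * \<eta> * (w s powr (1 - p) / Q s)) (at s within {0..t})"
    if s: "s \<in> {0..t}" for s t
  proof -
    have "(V has_real_derivative \<alpha> * w s powr (\<alpha> - 1) * (2 * gam s)) (at s within {0..t})"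
      unfolding V_def using wpow_der[of s t \<alpha>] s by simp
    moreover have "\<alpha> * w s powr (\<alpha> - 1) * (2 * gam s) = 2 * \<alpha> * \<eta> * (w s powr (1 - p) / Q s)"
      using s by (simp add: gamQ pa(3))
    ultimately show ?thesis by simp
  qed
  have Vlo: "V t \<ge> 1 + cA * t" if t: "t \<ge> 0" for t
  proof -
    have "(\<lambda>s. V s - cA * s) 0 \<le> (\<lambda>s. V s - cA * s) t"
    proof (rule deriv_mono[OF t])
      fix s assume s: "s \<in> {0..t}"
      show "((\<lambda>s. V s - cA * s) has_real_derivative 2 * \<alpha> * \<eta> * (w s powr (1 - p) / Q s) - cA) (at s within {0..t})"
        using Vder[OF s] by (auto intro!: derivative_eq_intros)
      have Qp: "Q s > 0" using Q_pos s by simp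
      have "1 / K1 \<le> w s powr (1 - p) / Q s"
        using Qup[of s] s Qp K1 by (simp add: field_simps K1_def)
      then have "2 * \<alpha> * \<eta> * (1 / K1) \<le> 2 * \<alpha> * \<eta> * (w s powr (1 - p) / Q s)"
        using al etapos by (intro mult_left_mono) auto
      then show "0 \<le> 2 * \<alpha> * \<eta> * (w s powr (1 - p) / Q s) - cA" by (simp add: cA_def)
    qed
    then show ?thesis by (simp add: V_def w0)
  qed
  have Vup: "V t \<le> 1 + CA * t" if t: "t \<ge> 0" for t
  proof -
    have "(\<lambda>s. V s - CA * s) t \<le> (\<lambda>s. V s - CA * s) 0"
    proof (rule deriv_anti[OF t])
      fix s assume s: "s \<in> {0..t}"
      show "((\<lambda>s. V s - CA * s) has_real_derivative 2 * \<alpha> * \<eta> * (w s powr (1 - p) / Q s) - CA) (at s within {0..t})"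
        using Vder[OF s] by (auto intro!: derivative_eq_intros)
      have Qp: "Q s > 0" using Q_pos s by simp
      have "w s powr (1 - p) / Q s \<le> 1 / k1"
        using Qlo[of s] s Qp k1 by (simp add: field_simps k1_def)
      then have "2 * \<alpha> * \<eta> * (w s powr (1 - p) / Q s) \<le> 2 * \<alpha> * \<eta> * (1 / k1)"
        using al etapos by (intro mult_left_mono) auto
      then show "2 * \<alpha> * \<eta> * (w s powr (1 - p) / Q s) - CA \<le> 0" by (simp add: CA_def)
    qed
    then show ?thesis by (simp add: V_def w0)
  qed
  have Vpos: "V t > 0" if "t \<ge> 0" for t using w_ge1[OF that] by (simp add: V_def)
  define e where "e = (\<alpha> - 1) / \<alpha>"
  have e: "e > 0" using al by (simp add: e_def)
  have wV: "w t powr (1 - p) = V t powr e" if "t \<ge> 0" for t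
    using al by (simp add: V_def e_def powr_powr pa(3))
  have wVp: "w t powr (- p) = V t powr (- p / \<alpha>)" if "t \<ge> 0" for t
    using al by (simp add: V_def powr_powr)
  have ex1: "- 1 + 1 / (\<beta> + \<delta>) = - e" using al by (simp add: e_def \<alpha>_def field_simps)
  have ex2: "- 2 / (\<beta> + \<delta>) + 1 = - p / \<alpha>" using al by (simp add: \<alpha>_def p_def field_simps)
  have Vbnd: "cA * t \<le> V t" "V t \<le> (1 + CA) * t" if "t \<ge> 1" for t
    using Vlo[of t] Vup[of t] that cA CA by (auto simp: algebra_simps)
  have G: "asymp_ge1 gam (\<lambda>t. t powr (- 1 + 1 / (\<beta> + \<delta>)))"
    unfolding asymp_ge1_def ex1
  proof (intro exI conjI allI impI)
    show "0 < \<eta> / K1 * (1 + CA) powr (- e)" using etapos K1 CA by simp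
    show "0 < \<eta> / k1 * cA powr (- e)" using etapos k1 cA by simp
    fix t :: real assume t1: "1 \<le> t"
    then have t: "t \<ge> 0" by simp
    have Qp: "Q t > 0" using Q_pos t by simp
    have "\<eta> / K1 * (1 + CA) powr (- e) * t powr (- e) = \<eta> / K1 * ((1 + CA) * t) powr (- e)"
      using CA t by (simp add: powr_mult)
    also have "\<dots> \<le> \<eta> / K1 * V t powr (- e)"
      using Vbnd(2)[OF t1] Vpos[OF t] e etapos K1 by (intro mult_left_mono powr_mono2') auto
    also have "\<dots> = \<eta> / (K1 * w t powr (1 - p))" using wV[OF t] Vpos[OF t] by (simp add: powr_minus divide_inverse)
    also have "\<dots> \<le> \<eta> / Q t" using Qup[OF t] Qp etapos K1 by (intro divide_left_mono) (auto simp: K1_def)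
    also have "\<dots> = gam t" using gamQ[OF t] by simp
    finally show "\<eta> / K1 * (1 + CA) powr (- e) * t powr (- e) \<le> gam t" .
    have "gam t = \<eta> / Q t" using gamQ[OF t] by simp
    also have "\<dots> \<le> \<eta> / (k1 * w t powr (1 - p))"
    proof (rule divide_left_mono)
      show "k1 * w t powr (1 - p) \<le> Q t" using Qlo[OF t] by (simp add: k1_def)
      have "0 < k1 * w t powr (1 - p)" using k1 wq1[OF t] by (intro mult_pos_pos) auto
      then show "0 < Q t * (k1 * w t powr (1 - p))" using Qp by simp
    qed (use etapos in simp)
    also have "\<dots> = \<eta> / k1 * V t powr (- e)" using wV[OF t] Vpos[OF t] by (simp add: powr_minus divide_inverse)
    also have "\<dots> \<le> \<eta> / k1 * (cA * t) powr (- e)"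
      using Vbnd(1)[OF t1] cA t1 e etapos k1 by (intro mult_left_mono powr_mono2') auto
    also have "\<dots> = \<eta> / k1 * cA powr (- e) * t powr (- e)" using cA t by (simp add: powr_mult)
    finally show "gam t \<le> \<eta> / k1 * cA powr (- e) * t powr (- e)" .
  qed
  have RR: "asymp_ge1 R (\<lambda>t. t powr (- 2 / (\<beta> + \<delta>) + 1))"
    unfolding asymp_ge1_def ex2
  proof (intro exI conjI allI impI)
    have pa0: "p / \<alpha> \<ge> 0" using p_pos al by simp
    show "0 < cL * (1 + CA) powr (- p / \<alpha>)" using cL_pos CA by simp
    show "0 < M * cA powr (- p / \<alpha>)" using M cA by simp
    fix t :: real assume t1: "1 \<le> t"
    then have t: "t \<ge> 0" by simp
    have "cL * (1 + CA) powr (- p / \<alpha>) * t powr (- p / \<alpha>) = cL * ((1 + CA) * t) powr (- p / \<alpha>)"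
      using CA t by (simp add: powr_mult)
    also have "\<dots> \<le> cL * V t powr (- p / \<alpha>)"
      using Vbnd(2)[OF t1] Vpos[OF t] pa0 cL_pos by (intro mult_left_mono powr_mono2') auto
    also have "\<dots> \<le> R t" using lowerw[OF t] wVp[OF t] by simp
    finally show "cL * (1 + CA) powr (- p / \<alpha>) * t powr (- p / \<alpha>) \<le> R t" .
    have "R t \<le> M * V t powr (- p / \<alpha>)" using M(2) t wVp[OF t] by auto
    also have "\<dots> \<le> M * (cA * t) powr (- p / \<alpha>)"
      using Vbnd(1)[OF t1] cA t1 pa0 M by (intro mult_left_mono powr_mono2') auto
    also have "\<dots> = M * cA powr (- p / \<alpha>) * t powr (- p / \<alpha>)" using cA t by (simp add: powr_mult)
    finally show "R t \<le> M * cA powr (- p / \<alpha>) * t powr (- p / \<alpha>)" .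
  qed
  show ?thesis using G RR by blast
qed

end

context adag begin

lemma case3:
  assumes a1: "\<beta> + \<delta> = 1"
  shows "asymp_ge1 gam (\<lambda>t. 1 / ln (t + 1)) \<and> asymp_ge1 R (\<lambda>t. inverse (t / ln (t + 1)))"
proof -
  have p1: "p = 1" using a1 by (simp add: p_def)
  obtain M where M: "M > 0" "\<forall>t\<ge>0. R t \<le> M * w t powr (- p)" using bootstrap by blast
  have wp: "w t > 0" if "t \<ge> 0" for t using w_ge1[OF that] by simp
  have Rup: "R t \<le> M / w t" if "t \<ge> 0" for t
  proof -
    have "R t \<le> M * w t powr (- p)" using M(2) that by blast
    then show ?thesis using wp[OF that] by (simp add: p1 powr_neg_one divide_inverse)
  qed
  have Rlo: "R t \<ge> cL / w t" if "t \<ge> 0" for t using lowerw[OF that] wp[OF that] by (simp add: p1 powr_neg_one divide_inverse)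
  have lnw_der: "((\<lambda>s. ln (w s)) has_real_derivative 2 * gam s / w s) (at s within {0..t})" if s: "s \<in> {0..t}" for s t
    using DERIV_chain2[OF DERIV_ln w_der[of s t]] s wp[of s] by (simp add: divide_inverse ac_simps)
  have lnw_nn: "ln (w t) \<ge> 0" if "t \<ge> 0" for t using w_ge1[OF that] by simp
  define KU where "KU = c0 * M / \<eta>"
  have KU: "KU > 0" using c0_pos M etapos by (simp add: KU_def)
  define KLo where "KLo = c0 * cL / (2 * \<eta>)"
  have KLo: "KLo > 0" using c0_pos cL_pos etapos by (simp add: KLo_def)
  have Qup0: "Q t \<le> b + KU * ln (w t)" if t: "t \<ge> 0" for t
  proof -
    have "(\<lambda>s. Q s - KU * ln (w s)) t \<le> (\<lambda>s. Q s - KU * ln (w s)) 0"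
    proof (rule deriv_anti[OF t])
      fix s assume s: "s \<in> {0..t}"
      show "((\<lambda>s. Q s - KU * ln (w s)) has_real_derivative c0 * R s / Q s - KU * (2 * gam s / w s)) (at s within {0..t})"
        using s by (intro DERIV_diff Q_der DERIV_cmult lnw_der) auto
      have Qp: "Q s > 0" using Q_pos s by simp
      have e: "KU * (2 * gam s / w s) = 2 * c0 * M / w s / Q s"
        using etapos Qp s by (simp add: KU_def gamQ field_simps)
      have "c0 * R s \<le> 2 * c0 * M / w s"
      proof -
        have "R s \<le> M / w s" using Rup s by auto
        also have "\<dots> \<le> 2 * (M / w s)"
        proof -
          have "0 \<le> M / w s" using M(1) wp[of s] s by simp
          then show ?thesis by linarith
        qed
        finally have "R s \<le> 2 * (M / w s)" .
        then have "c0 * R s \<le> c0 * (2 * (M / w s))" using c0_pos by (intro mult_left_mono) auto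
        then show ?thesis by (simp add: mult.assoc mult.left_commute)
      qed
      then have "c0 * R s / Q s \<le> 2 * c0 * M / w s / Q s" by (rule divide_right_mono) (use Qp in auto)
      then show "c0 * R s / Q s - KU * (2 * gam s / w s) \<le> 0" using e by simp
    qed
    then show ?thesis using Q0 w0 by simp
  qed
  have Qlo0: "Q t \<ge> b + KLo * ln (w t)" if t: "t \<ge> 0" for t
  proof -
    have "(\<lambda>s. Q s - KLo * ln (w s)) 0 \<le> (\<lambda>s. Q s - KLo * ln (w s)) t"
    proof (rule deriv_mono[OF t])
      fix s assume s: "s \<in> {0..t}"
      show "((\<lambda>s. Q s - KLo * ln (w s)) has_real_derivative c0 * R s / Q s - KLo * (2 * gam s / w s)) (at s within {0..t})"
        using s by (intro DERIV_diff Q_der DERIV_cmult lnw_der) auto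
      have Qp: "Q s > 0" using Q_pos s by simp
      have e: "KLo * (2 * gam s / w s) = c0 * cL / w s / Q s"
        using etapos Qp s by (simp add: KLo_def gamQ field_simps)
      have "c0 * (cL / w s) \<le> c0 * R s" using Rlo[of s] s c0_pos by (intro mult_left_mono) auto
      then have "c0 * cL / w s \<le> c0 * R s" by simp
      then have "c0 * cL / w s / Q s \<le> c0 * R s / Q s" by (intro divide_right_mono) (use Qp in auto)
      then show "0 \<le> c0 * R s / Q s - KLo * (2 * gam s / w s)" using e by simp
    qed
    then show ?thesis using Q0 w0 by simp
  qed
  define K1 where "K1 = b + KU"
  define k1 where "k1 = min b KLo"
  have K1: "K1 > 0" using bpos KU by (simp add: K1_def)
  have k1: "k1 > 0" using bpos KLo by (simp add: k1_def)
  define L where "L t = 1 + ln (w t)" for t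
  have L1: "L t \<ge> 1" if "t \<ge> 0" for t using lnw_nn[OF that] by (simp add: L_def)
  have Qup: "Q t \<le> K1 * L t" if t: "t \<ge> 0" for t
  proof -
    have "b + KU * ln (w t) \<le> K1 * L t"
      using lnw_nn[OF t] bpos KU by (simp add: K1_def L_def algebra_simps)
    then show ?thesis using Qup0[OF t] by linarith
  qed
  have Qlo: "Q t \<ge> k1 * L t" if t: "t \<ge> 0" for t
  proof -
    have "k1 * L t \<le> b + KLo * ln (w t)"
    proof (cases "b \<le> KLo")
      case True
      then have "b * ln (w t) \<le> KLo * ln (w t)" using lnw_nn[OF t] by (intro mult_right_mono) auto
      then show ?thesis using True by (simp add: k1_def L_def algebra_simps)
    next
      case False
      then show ?thesis by (simp add: k1_def L_def algebra_simps)
    qed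
    then show ?thesis using Qlo0[OF t] by linarith
  qed
  define V where "V t = w t * ln (w t)" for t
  define cA where "cA = 2 * \<eta> / K1"
  define CA where "CA = 2 * \<eta> / k1"
  have cA: "cA > 0" using etapos K1 by (simp add: cA_def)
  have CA: "CA > 0" using etapos k1 by (simp add: CA_def)
  have Vder: "(V has_real_derivative 2 * \<eta> * (L s / Q s)) (at s within {0..t})" if s: "s \<in> {0..t}" for s t
  proof -
    have "(V has_real_derivative (2 * gam s) * ln (w s) + (2 * gam s / w s) * w s) (at s within {0..t})"
      unfolding V_def using DERIV_mult[OF w_der[of s t] lnw_der[OF s]] s by auto
    moreover have "(2 * gam s) * ln (w s) + (2 * gam s / w s) * w s = 2 * \<eta> * (L s / Q s)"
      using s wp[of s] by (simp add: gamQ L_def add_divide_distrib algebra_simps)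
    ultimately show ?thesis by simp
  qed
  have V0: "V 0 = 0" by (simp add: V_def w0)
  have Vlo: "V t \<ge> cA * t" if t: "t \<ge> 0" for t
  proof -
    have "(\<lambda>s. V s - cA * s) 0 \<le> (\<lambda>s. V s - cA * s) t"
    proof (rule deriv_mono[OF t])
      fix s assume s: "s \<in> {0..t}"
      show "((\<lambda>s. V s - cA * s) has_real_derivative 2 * \<eta> * (L s / Q s) - cA) (at s within {0..t})"
        using Vder[OF s] by (auto intro!: derivative_eq_intros)
      have Qp: "Q s > 0" using Q_pos s by simp
      have "1 / K1 \<le> L s / Q s" using Qup[of s] s Qp K1 by (simp add: field_simps)
      then have "2 * \<eta> * (1 / K1) \<le> 2 * \<eta> * (L s / Q s)" using etapos by (intro mult_left_mono) auto
      then show "0 \<le> 2 * \<eta> * (L s / Q s) - cA" by (simp add: cA_def)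
    qed
    then show ?thesis using V0 by simp
  qed
  have Vup: "V t \<le> CA * t" if t: "t \<ge> 0" for t
  proof -
    have "(\<lambda>s. V s - CA * s) t \<le> (\<lambda>s. V s - CA * s) 0"
    proof (rule deriv_anti[OF t])
      fix s assume s: "s \<in> {0..t}"
      show "((\<lambda>s. V s - CA * s) has_real_derivative 2 * \<eta> * (L s / Q s) - CA) (at s within {0..t})"
        using Vder[OF s] by (auto intro!: derivative_eq_intros)
      have Qp: "Q s > 0" using Q_pos s by simp
      have "L s / Q s \<le> 1 / k1" using Qlo[of s] s Qp k1 by (simp add: field_simps)
      then have "2 * \<eta> * (L s / Q s) \<le> 2 * \<eta> * (1 / k1)" using etapos by (intro mult_left_mono) auto
      then show "2 * \<eta> * (L s / Q s) - CA \<le> 0" by (simp add: CA_def)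
    qed
    then show ?thesis using V0 by simp
  qed
  have ln2: "0 < ln (2::real)" "ln (2::real) < 1" using ln_2_less_1 by auto
  define Kup where "Kup = (1 + ln (1 + 2 * g0)) / ln 2 + 1"
  have lnt: "ln (t + 1) \<ge> ln 2" if "t \<ge> 1" for t :: real using that by simp
  have Lup: "L t \<le> Kup * ln (t + 1)" if t1: "t \<ge> 1" for t
  proof -
    have t: "t \<ge> 0" using t1 by simp
    have "w t \<le> (1 + 2 * g0) * (1 + t)" using w_upper[OF t] g0_pos t by (simp add: algebra_simps)
    then have "ln (w t) \<le> ln ((1 + 2 * g0) * (1 + t))" using wp[OF t] by simp
    also have "\<dots> = ln (1 + 2 * g0) + ln (t + 1)" using g0_pos t by (simp add: ln_mult add.commute)
    finally have A: "L t \<le> 1 + ln (1 + 2 * g0) + ln (t + 1)" by (simp add: L_def)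
    have B: "1 + ln (1 + 2 * g0) \<le> (1 + ln (1 + 2 * g0)) / ln 2 * ln (t + 1)"
    proof -
      have nn: "1 + ln (1 + 2 * g0) \<ge> 0" using g0_pos by simp
      have "(1 + ln (1 + 2 * g0)) / ln 2 * ln 2 \<le> (1 + ln (1 + 2 * g0)) / ln 2 * ln (t + 1)"
        using lnt[OF t1] nn ln2 by (intro mult_left_mono) auto
      then show ?thesis using ln2 by simp
    qed
    show ?thesis using A B by (simp add: Kup_def algebra_simps)
  qed
  define lc where "lc = \<bar>ln cA\<bar>"
  define kk where "kk = min (1/4) (1 / (ln 2 + 2 * lc + 2))"
  have lc: "lc \<ge> 0" by (simp add: lc_def)
  have kk: "kk > 0"
  proof -
    have "0 < ln 2 + 2 * lc + 2" using ln2 lc by linarith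
    then show ?thesis by (simp add: kk_def)
  qed
  have Llo: "L t \<ge> kk * ln (t + 1)" if t1: "t \<ge> 1" for t
  proof -
    have t: "t \<ge> 0" using t1 by simp
    have lt1: "ln (t + 1) \<le> ln 2 + ln t"
    proof -
      have "ln (t + 1) \<le> ln (2 * t)" using t1 by simp
      also have "\<dots> = ln 2 + ln t" using t1 by (simp add: ln_mult)
      finally show ?thesis .
    qed
    have lt0: "ln t \<ge> 0" using t1 by simp
    have "cA * t \<le> w t * w t"
    proof -
      have "ln (w t) \<le> w t" using wp[OF t] ln_le_minus_one[of "w t"] by simp
      then have "V t \<le> w t * w t" using wp[OF t] by (simp add: V_def mult_left_mono)
      then show ?thesis using Vlo[OF t] by simp
    qed
    then have "ln (cA * t) \<le> ln (w t * w t)" using cA t1 wp[OF t] by (subst ln_le_cancel_iff) auto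
    then have W2: "ln cA + ln t \<le> 2 * ln (w t)" using cA t1 wp[OF t] by (simp add: ln_mult)
    show ?thesis
    proof (cases "ln t \<le> 2 * lc + 2")
      case True
      have "kk * ln (t + 1) \<le> kk * (ln 2 + 2 * lc + 2)" using lt1 True kk by (intro mult_left_mono) auto
      also have "\<dots> \<le> 1"
      proof -
        have Xp: "0 < ln 2 + 2 * lc + 2" using ln2 lc by linarith
        have "kk \<le> 1 / (ln 2 + 2 * lc + 2)" by (simp add: kk_def)
        then have "kk * (ln 2 + 2 * lc + 2) \<le> 1 / (ln 2 + 2 * lc + 2) * (ln 2 + 2 * lc + 2)"
          by (rule mult_right_mono) (use Xp in simp)
        then show ?thesis using Xp by simp
      qed
      finally show ?thesis using L1[OF t] by simp
    next
      case False
      have "kk * ln (t + 1) \<le> (1/4) * (ln 2 + ln t)"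
        using lt1 kk lt0 ln2 lnt[OF t1] t1 by (intro mult_mono) (auto simp: kk_def intro: ln_ge_zero)
      moreover have "- lc \<le> ln cA" by (simp add: lc_def)
      ultimately show ?thesis using W2 False ln2 by (simp add: L_def)
    qed
  qed
  have G: "asymp_ge1 gam (\<lambda>t. 1 / ln (t + 1))"
    unfolding asymp_ge1_def
  proof (intro exI conjI allI impI)
    have Kp: "Kup > 0" using ln2 g0_pos by (simp add: Kup_def add_pos_nonneg)
    show "0 < \<eta> / (K1 * Kup)" using etapos K1 Kp by simp
    show "0 < \<eta> / (k1 * kk)" using etapos k1 kk by simp
    fix t :: real assume t1: "1 \<le> t"
    then have t: "t \<ge> 0" by simp
    have lp: "ln (t + 1) > 0" using t1 by simp
    have Qp: "Q t > 0" using Q_pos t by simp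
    have "\<eta> / (K1 * Kup) * (1 / ln (t + 1)) = \<eta> / (K1 * (Kup * ln (t + 1)))" by simp
    also have "\<dots> \<le> \<eta> / (K1 * L t)"
      using Lup[OF t1] L1[OF t] etapos K1 by (intro divide_left_mono mult_left_mono) auto
    also have "\<dots> \<le> \<eta> / Q t" using Qup[OF t] Qp etapos by (intro divide_left_mono) auto
    finally show "\<eta> / (K1 * Kup) * (1 / ln (t + 1)) \<le> gam t" using gamQ[OF t] by simp
    have "gam t = \<eta> / Q t" using gamQ[OF t] by simp
    also have "\<dots> \<le> \<eta> / (k1 * L t)"
    proof (rule divide_left_mono)
      show "k1 * L t \<le> Q t" using Qlo[OF t] .
      have "0 < k1 * L t" using k1 L1[OF t] by (intro mult_pos_pos) auto
      then show "0 < Q t * (k1 * L t)" using Qp by simp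
    qed (use etapos in simp)
    also have "\<dots> \<le> \<eta> / (k1 * (kk * ln (t + 1)))"
    proof (rule divide_left_mono)
      show "k1 * (kk * ln (t + 1)) \<le> k1 * L t" using Llo[OF t1] k1 by (intro mult_left_mono) auto
      have "0 < k1 * (kk * ln (t + 1))" using k1 kk lp by simp
      moreover have "0 < k1 * L t" using k1 L1[OF t] by (intro mult_pos_pos) auto
      ultimately show "0 < k1 * L t * (k1 * (kk * ln (t + 1)))" by simp
    qed (use etapos in simp)
    also have "\<dots> = \<eta> / (k1 * kk) * (1 / ln (t + 1))" by simp
    finally show "gam t \<le> \<eta> / (k1 * kk) * (1 / ln (t + 1))" .
  qed
  define w1 where "w1 = w 1"
  have lw1: "ln w1 > 0"
  proof -
    have "V 1 \<ge> cA" using Vlo[of 1] by simp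
    then have "w1 * ln w1 > 0" using cA by (simp add: V_def w1_def)
    then show ?thesis using wp[of 1] by (simp add: w1_def zero_less_mult_iff)
  qed
  define \<kappa> where "\<kappa> = ln w1 / (1 + ln w1)"
  have kap: "\<kappa> > 0" using lw1 by (simp add: \<kappa>_def)
  have lnwlo: "ln (w t) \<ge> \<kappa> * kk * ln (t + 1)" if t1: "t \<ge> 1" for t
  proof -
    have t: "t \<ge> 0" using t1 by simp
    have "w1 \<le> w t" using w_mono[of 1 t] t1 by (simp add: w1_def)
    then have "ln w1 \<le> ln (w t)" using wp[of 1] by (simp add: w1_def)
    then have "ln w1 * (1 + ln (w t)) \<le> ln (w t) * (1 + ln w1)" by (simp add: algebra_simps)
    then have A: "\<kappa> * L t \<le> ln (w t)" using lw1 by (simp add: \<kappa>_def L_def field_simps)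
    have "\<kappa> * (kk * ln (t + 1)) \<le> \<kappa> * L t" using Llo[OF t1] kap by (intro mult_left_mono) auto
    then show ?thesis using A by simp
  qed
  have RR: "asymp_ge1 R (\<lambda>t. inverse (t / ln (t + 1)))"
    unfolding asymp_ge1_def
  proof (intro exI conjI allI impI)
    have Kp: "Kup > 0" using ln2 g0_pos by (simp add: Kup_def add_pos_nonneg)
    show "0 < cL * \<kappa> * kk / CA" using cL_pos kap kk CA by simp
    show "0 < M * Kup / cA" using M Kp cA by simp
    fix t :: real assume t1: "1 \<le> t"
    then have t: "t \<ge> 0" by simp
    have lp: "ln (t + 1) > 0" using t1 by simp
    have wpt: "w t > 0" using wp[OF t] .
    have lwp: "ln (w t) > 0" using lnwlo[OF t1] kap kk lp by (smt (verit) mult_pos_pos)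
    have inv: "inverse (t / ln (t + 1)) = ln (t + 1) / t" by simp
    have "w t \<le> CA * t / ln (w t)" using Vup[OF t] lwp by (simp add: V_def field_simps)
    also have "\<dots> \<le> CA * t / (\<kappa> * kk * ln (t + 1))"
      using lnwlo[OF t1] CA t kap kk lp lwp by (intro divide_left_mono) auto
    finally have wub: "w t \<le> CA * t / (\<kappa> * kk * ln (t + 1))" .
    have "cL * \<kappa> * kk / CA * inverse (t / ln (t + 1)) = cL / (CA * t / (\<kappa> * kk * ln (t + 1)))"
      using t1 by (simp add: field_simps)
    also have "\<dots> \<le> cL / w t" using wub wpt cL_pos CA t1 kap kk lp by (intro divide_left_mono) auto
    also have "\<dots> \<le> R t" using Rlo[OF t] .
    finally show "cL * \<kappa> * kk / CA * inverse (t / ln (t + 1)) \<le> R t" .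
    have "ln (w t) \<le> Kup * ln (t + 1)" using Lup[OF t1] by (simp add: L_def)
    then have "cA * t / (Kup * ln (t + 1)) \<le> cA * t / ln (w t)"
      using lwp cA t by (intro divide_left_mono) auto
    also have "cA * t / ln (w t) \<le> w t" using Vlo[OF t] lwp by (simp add: V_def field_simps)
    finally have wlb: "cA * t / (Kup * ln (t + 1)) \<le> w t" .
    have "R t \<le> M / w t" using Rup[OF t] .
    also have "\<dots> \<le> M / (cA * t / (Kup * ln (t + 1)))"
      using wlb M(1) cA t1 Kp lp wpt by (intro divide_left_mono) auto
    also have "\<dots> = M * Kup / cA * inverse (t / ln (t + 1))" using t1 cA by (simp add: field_simps)
    finally show "R t \<le> M * Kup / cA * inverse (t / ln (t + 1))" .
  qed
  show ?thesis using G RR by blast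
qed

end

theorem proposition5:
  fixes \<beta> \<delta> b \<eta> a A :: real
    and D :: "real \<Rightarrow> real \<Rightarrow> real" and R gam :: "real \<Rightarrow> real"
  assumes "\<beta> < 1" and "\<delta> \<ge> 0" and "b > 0" and "\<eta> > 0"
    and "a > 0" and "A > 0"
    and "\<forall>l\<in>{0<..<1}. a * l powr (- \<delta>) \<le> D l 0 \<and> D l 0 \<le> A * l powr (- \<delta>)"
    and "adagrad_norm_ls_dynamics \<beta> b \<eta> D R gam"
  shows "(\<beta> + \<delta> < 1 \<longrightarrow>
            (\<exists>g. g > 0 \<and> (\<forall>t\<ge>0. gam t \<ge> g)) \<and>
            asymp_ge1 R (\<lambda>t. t powr (\<beta> + \<delta> - 2)))
       \<and> (1 < \<beta> + \<delta> \<and> \<beta> + \<delta> < 2 \<longrightarrow>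
            asymp_ge1 gam (\<lambda>t. t powr (- 1 + 1 / (\<beta> + \<delta>))) \<and>
            asymp_ge1 R (\<lambda>t. t powr (- 2 / (\<beta> + \<delta>) + 1)))
       \<and> (\<beta> + \<delta> = 1 \<longrightarrow>
            asymp_ge1 gam (\<lambda>t. 1 / ln (t + 1)) \<and>
            asymp_ge1 R (\<lambda>t. inverse (t / ln (t + 1))))"
proof -
  have L: "adag \<beta> \<delta> b \<eta> a A D R gam" if "\<beta> + \<delta> < 2"
    using assms that by unfold_locales auto
  have c1: "(\<exists>g. g > 0 \<and> (\<forall>t\<ge>0. gam t \<ge> g)) \<and> asymp_ge1 R (\<lambda>t. t powr (\<beta> + \<delta> - 2))"
    if h: "\<beta> + \<delta> < 1"
    using adag.case1[OF L h] h by simp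
  have c2: "asymp_ge1 gam (\<lambda>t. t powr (- 1 + 1 / (\<beta> + \<delta>))) \<and> asymp_ge1 R (\<lambda>t. t powr (- 2 / (\<beta> + \<delta>) + 1))"
    if h: "1 < \<beta> + \<delta> \<and> \<beta> + \<delta> < 2"
    using adag.case2[OF L] h by simp
  have c3: "asymp_ge1 gam (\<lambda>t. 1 / ln (t + 1)) \<and> asymp_ge1 R (\<lambda>t. inverse (t / ln (t + 1)))"
    if h: "\<beta> + \<delta> = 1"
    using adag.case3[OF L] h by simp
  show ?thesis using c1 c2 c3 by blast
qed

end
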